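(* Let $\{\rho_\theta\}_{\theta\in\Theta}$ be a differentiable family of density operators on a $d$-dimensional Hilbert space. For $\varepsilon\in(0,1)$ set $\rho_\theta^\varepsilon:=(1-\varepsilon)\rho_\theta+\varepsilon\, I/d$. Then $$\widehat I_F(\theta;\{\rho_\theta\}_\theta)=\lim_{\varepsilon\to 0}\widehat I_F(\theta;\{\rho^\varepsilon_\theta\}_\theta),$$ including the case where the left-hand side equals $+\infty$.
   Context: All Hilbert spaces are finite-dimensional; $\Theta\subseteq\mathbb{R}$ and $\partial_\theta$ denotes the derivative with respect to $\theta$. For a differentiable family $\{\rho_\theta\}_\theta$ of density operators, the RLD Fisher information is $\widehat I_F(\theta;\{\rho_\theta\}_\theta)=\operatorname{Tr}[(\partial_\theta\rho_\theta)^2\rho_\theta^{-1}]$ if $\operatorname{supp}(\partial_\theta\rho_\theta)\subseteq\operatorname{supp}(\rho_\theta)$, and $+\infty$ otherwise, where $\rho_\theta^{-1}$ is the inverse on the support of $\rho_\theta$. *)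

theory Defs
  imports "HOL-Analysis.Derivative" "Jordan_Normal_Form.Matrix"
begin

definition hermitian_mat :: "nat \<Rightarrow> complex mat \<Rightarrow> bool" where
  "hermitian_mat d A \<longleftrightarrow> A \<in> carrier_mat d d \<and>
     (\<forall>i<d. \<forall>j<d. A $$ (i,j) = cnj (A $$ (j,i)))"

definition psd_mat :: "nat \<Rightarrow> complex mat \<Rightarrow> bool" where
  "psd_mat d A \<longleftrightarrow> hermitian_mat d A \<and>
     (\<forall>v \<in> carrier_vec d. Im ((A *\<^sub>v v) \<bullet>c v) = 0 \<and> 0 \<le> Re ((A *\<^sub>v v) \<bullet>c v))"

definition mtrace :: "complex mat \<Rightarrow> complex" where
  "mtrace A = (\<Sum>i<dim_row A. A $$ (i,i))"

definition density_op :: "nat \<Rightarrow> complex mat \<Rightarrow> bool" where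
  "density_op d A \<longleftrightarrow> psd_mat d A \<and> mtrace A = 1"

definition supp_op :: "nat \<Rightarrow> complex mat \<Rightarrow> complex vec set" where
  "supp_op d A = {A *\<^sub>v v | v. v \<in> carrier_vec d}"

definition inv_supp :: "nat \<Rightarrow> complex mat \<Rightarrow> complex mat" where
  "inv_supp d A = (THE X. X \<in> carrier_mat d d \<and>
      (\<forall>w \<in> supp_op d A. X *\<^sub>v w \<in> supp_op d A \<and> A *\<^sub>v (X *\<^sub>v w) = w) \<and>
      (\<forall>w \<in> carrier_vec d. (\<forall>u \<in> supp_op d A. u \<bullet>c w = 0) \<longrightarrow> X *\<^sub>v w = 0\<^sub>v d))"

definition mat_differentiable :: "nat \<Rightarrow> (real \<Rightarrow> complex mat) \<Rightarrow> real \<Rightarrow> bool" where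
  "mat_differentiable d \<rho> \<theta> \<longleftrightarrow>
     (\<forall>i<d. \<forall>j<d. (\<lambda>t. \<rho> t $$ (i,j)) differentiable (at \<theta>))"

definition mat_deriv :: "nat \<Rightarrow> (real \<Rightarrow> complex mat) \<Rightarrow> real \<Rightarrow> complex mat" where
  "mat_deriv d \<rho> \<theta> = mat d d (\<lambda>(i,j). vector_derivative (\<lambda>t. \<rho> t $$ (i,j)) (at \<theta>))"

definition RLD_fisher :: "nat \<Rightarrow> (real \<Rightarrow> complex mat) \<Rightarrow> real \<Rightarrow> ereal" where
  "RLD_fisher d \<rho> \<theta> =
     (let D = mat_deriv d \<rho> \<theta> in
      if supp_op d D \<subseteq> supp_op d (\<rho> \<theta>)
      then ereal (Re (mtrace (D * D * inv_supp d (\<rho> \<theta>))))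
      else \<infinity>)"

definition depolarize :: "nat \<Rightarrow> real \<Rightarrow> (real \<Rightarrow> complex mat) \<Rightarrow> real \<Rightarrow> complex mat" where
  "depolarize d \<epsilon> \<rho> t = complex_of_real (1 - \<epsilon>) \<cdot>\<^sub>m \<rho> t + complex_of_real (\<epsilon> / real d) \<cdot>\<^sub>m 1\<^sub>m d"

end

theory Submission
  imports Defs
begin
unbundle no vec_syntax

lemma cs_def': "(x::complex vec) \<in> carrier_vec n \<Longrightarrow> (y::complex vec) \<in> carrier_vec n \<Longrightarrow>
  x \<bullet>c y = (\<Sum>i<n. x$i * cnj (y$i))"
  by (auto simp: scalar_prod_def atLeast0LessThan intro!: sum.cong)

lemma matvec_idx: "A \<in> carrier_mat n n \<Longrightarrow> (x::complex vec) \<in> carrier_vec n \<Longrightarrow> i < n \<Longrightarrow>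
  (A *\<^sub>v x) $ i = (\<Sum>j<n. A$$(i,j) * x$j)"
  by (auto simp: scalar_prod_def atLeast0LessThan intro!: sum.cong)

lemma matvec_zero: "A \<in> carrier_mat n n \<Longrightarrow> A *\<^sub>v 0\<^sub>v n = (0\<^sub>v n :: complex vec)"
  by (intro eq_vecI) (auto simp: matvec_idx)

lemma matvec_unit: assumes A: "A \<in> carrier_mat n n" and j: "j < n"
  shows "A *\<^sub>v unit_vec n j = col (A :: complex mat) j"
proof (rule eq_vecI)
  fix i assume "i < dim_vec (col A j)"
  then have i: "i < n" using A by simp
  have "(A *\<^sub>v unit_vec n j) $ i = (\<Sum>k<n. A$$(i,k) * unit_vec n j $ k)"
    by (rule matvec_idx[OF A _ i]) simp
  also have "\<dots> = (\<Sum>k<n. if k = j then A$$(i,j) else 0)" by (rule sum.cong) (auto simp: unit_vec_def)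
  also have "\<dots> = A$$(i,j)" using j by simp
  finally show "(A *\<^sub>v unit_vec n j) $ i = col A j $ i" using A i j by simp
qed (use A in simp)

lemma matvec_zero_mat: "w \<in> carrier_vec n \<Longrightarrow> 0\<^sub>m n n *\<^sub>v w = (0\<^sub>v n :: complex vec)"
  by (intro eq_vecI) (auto simp: matvec_idx)

lemma mat_eq_by_col: assumes "A \<in> carrier_mat n n" "B \<in> carrier_mat n n"
  "\<And>j. j < n \<Longrightarrow> col A j = col (B :: complex mat) j"
  shows "A = B"
proof (rule eq_matI)
  fix i j assume i: "i < dim_row B" and j: "j < dim_col B"
  have "col A j $ i = col B j $ i" using assms(2,3) j by simp
  then show "A $$ (i, j) = B $$ (i, j)" using assms(1,2) i j by simp
qed (use assms in auto)

lemma mat_eq_by_vec: assumes "A \<in> carrier_mat n n" "B \<in> carrier_mat n n"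
  "\<And>w. w \<in> carrier_vec n \<Longrightarrow> A *\<^sub>v w = B *\<^sub>v (w :: complex vec)"
  shows "A = B"
proof (rule eq_matI)
  fix i j assume i: "i < dim_row B" and j: "j < dim_col B"
  have "A *\<^sub>v unit_vec n j = B *\<^sub>v unit_vec n j" using assms(3) by simp
  then have "col A j = col B j" using assms(1,2) j by (simp add: matvec_unit)
  then have "col A j $ i = col B j $ i" by simp
  then show "A $$ (i, j) = B $$ (i, j)" using assms i j by simp
qed (use assms in auto)

lemma cs_add_left: assumes "(x::complex vec) \<in> carrier_vec n" "(y::complex vec) \<in> carrier_vec n" "(z::complex vec) \<in> carrier_vec n"
  shows "(x + y) \<bullet>c z = x \<bullet>c z + y \<bullet>c z"
proof -
  have "x + (y::complex vec) \<in> carrier_vec n" using assms by simp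
  then have c: "x + (y::complex vec) \<in> carrier_vec n" .
  show ?thesis using assms by (auto simp: cs_def' cs_def'[OF c assms(3)] sum.distrib[symmetric] distrib_right intro!: sum.cong)
qed

lemma cs_add_right: assumes "(x::complex vec) \<in> carrier_vec n" "(y::complex vec) \<in> carrier_vec n" "(z::complex vec) \<in> carrier_vec n"
  shows "x \<bullet>c (y + z) = x \<bullet>c y + x \<bullet>c z"
proof -
  have "y + (z::complex vec) \<in> carrier_vec n" using assms by simp
  then show ?thesis using assms by (auto simp: cs_def' sum.distrib[symmetric] distrib_left intro!: sum.cong)
qed

lemma cs_minus_left: assumes "(x::complex vec) \<in> carrier_vec n" "(y::complex vec) \<in> carrier_vec n" "(z::complex vec) \<in> carrier_vec n"
  shows "(x - y) \<bullet>c z = x \<bullet>c z - y \<bullet>c z"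
proof -
  have "x - (y::complex vec) \<in> carrier_vec n" using assms by simp
  then have c: "x - (y::complex vec) \<in> carrier_vec n" .
  show ?thesis using assms by (auto simp: cs_def' cs_def'[OF c assms(3)] sum_subtractf[symmetric] left_diff_distrib intro!: sum.cong)
qed

lemma cs_minus_right: assumes "(x::complex vec) \<in> carrier_vec n" "(y::complex vec) \<in> carrier_vec n" "(z::complex vec) \<in> carrier_vec n"
  shows "x \<bullet>c (y - z) = x \<bullet>c y - x \<bullet>c z"
proof -
  have "y - (z::complex vec) \<in> carrier_vec n" using assms by simp
  then show ?thesis using assms by (auto simp: cs_def' sum_subtractf[symmetric] right_diff_distrib intro!: sum.cong)
qed

lemma cs_smult_left: "(x::complex vec) \<in> carrier_vec n \<Longrightarrow> (y::complex vec) \<in> carrier_vec n \<Longrightarrow>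
  (a \<cdot>\<^sub>v x) \<bullet>c y = a * (x \<bullet>c y)"
  by (simp add: cs_def' sum_distrib_left mult.assoc)

lemma cs_smult_right: "(x::complex vec) \<in> carrier_vec n \<Longrightarrow> (y::complex vec) \<in> carrier_vec n \<Longrightarrow>
  x \<bullet>c (a \<cdot>\<^sub>v y) = cnj a * (x \<bullet>c y)"
  by (simp add: cs_def' sum_distrib_left algebra_simps)

lemma cs_swap: "(x::complex vec) \<in> carrier_vec n \<Longrightarrow> (y::complex vec) \<in> carrier_vec n \<Longrightarrow>
  y \<bullet>c x = cnj (x \<bullet>c y)"
  by (simp add: cs_def' mult.commute)

lemma cs_zero_right: "(x::complex vec) \<in> carrier_vec n \<Longrightarrow> x \<bullet>c 0\<^sub>v n = 0"
  by (simp add: cs_def')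

lemma cs_zero_left: "(x::complex vec) \<in> carrier_vec n \<Longrightarrow> 0\<^sub>v n \<bullet>c x = 0"
  by (simp add: cs_def')

lemma mult_cnj_norm: "z * cnj z = complex_of_real ((cmod z)\<^sup>2)"
  using complex_norm_square[of z] by simp

lemma cs_self: "(x::complex vec) \<in> carrier_vec n \<Longrightarrow> x \<bullet>c x = of_real (\<Sum>i<n. (cmod (x$i))\<^sup>2)"
  by (simp add: cs_def' mult_cnj_norm del: of_real_power)

lemma cs_self_Re: "(x::complex vec) \<in> carrier_vec n \<Longrightarrow> Re (x \<bullet>c x) = (\<Sum>i<n. (cmod (x$i))\<^sup>2)"
  by (simp add: cs_self)

lemma cs_self_Im: "(x::complex vec) \<in> carrier_vec n \<Longrightarrow> Im (x \<bullet>c x) = 0"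
  by (simp add: cs_self)

lemma cs_self_nonneg: "(x::complex vec) \<in> carrier_vec n \<Longrightarrow> 0 \<le> Re (x \<bullet>c x)"
  by (simp add: cs_self_Re sum_nonneg)

lemma cs_self_zero: assumes "(x::complex vec) \<in> carrier_vec n" "Re (x \<bullet>c x) = 0" shows "x = 0\<^sub>v n"
proof -
  have s0: "(\<Sum>i<n. (cmod (x$i))\<^sup>2) = 0" using assms(2) cs_self_Re[OF assms(1)] by simp
  have "\<forall>i\<in>{..<n}. (cmod (x$i))\<^sup>2 = 0"
    using sum_nonneg_eq_0_iff[of "{..<n}" "\<lambda>i. (cmod (x$i))\<^sup>2"] s0 by simp
  show ?thesis
  proof (rule eq_vecI)
    fix i assume "i < dim_vec (0\<^sub>v n :: complex vec)"
    then have i: "i \<in> {..<n}" by simp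
    then have "(cmod (x$i))\<^sup>2 = 0" using \<open>\<forall>i\<in>{..<n}. (cmod (x$i))\<^sup>2 = 0\<close> by blast
    then show "x $ i = 0\<^sub>v n $ i" using i by simp
  next
    show "dim_vec x = dim_vec (0\<^sub>v n :: complex vec)" using assms by simp
  qed
qed

lemma comp_le: assumes "(x::complex vec) \<in> carrier_vec n" "i < n" shows "cmod (x$i) \<le> sqrt (Re (x \<bullet>c x))"
proof -
  have h: "(cmod (x$i))\<^sup>2 \<le> (\<Sum>i<n. (cmod (x$i))\<^sup>2)"
    using assms by (intro member_le_sum) auto
  show ?thesis by (subst cs_self_Re[OF assms(1)]) (rule real_le_rsqrt[OF h])
qed

lemma cs_bound: assumes "(x::complex vec) \<in> carrier_vec n" "(y::complex vec) \<in> carrier_vec n"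
  shows "cmod (x \<bullet>c y) \<le> sqrt (Re (x \<bullet>c x)) * (\<Sum>i<n. cmod (y$i))"
proof -
  have e: "x \<bullet>c y = (\<Sum>i<n. x$i * cnj (y$i))" by (rule cs_def'[OF assms])
  have "cmod (x \<bullet>c y) \<le> (\<Sum>i<n. cmod (x$i * cnj (y$i)))"
    unfolding e by (rule norm_sum)
  also have "\<dots> = (\<Sum>i<n. cmod (x$i) * cmod (y$i))"
    by (rule sum.cong[OF refl]) (simp only: norm_mult complex_mod_cnj)
  also have "\<dots> \<le> (\<Sum>i<n. sqrt (Re (x \<bullet>c x)) * cmod (y$i))"
  proof (rule sum_mono)
    fix i assume "i \<in> {..<n}"
    then show "cmod (x$i) * cmod (y$i) \<le> sqrt (Re (x \<bullet>c x)) * cmod (y$i)"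
      using assms comp_le[of x n i] by (simp add: mult_right_mono)
  qed
  also have "\<dots> = sqrt (Re (x \<bullet>c x)) * (\<Sum>i<n. cmod (y$i))"
    by (rule sum_distrib_left[symmetric])
  finally show ?thesis .
qed

lemma herm_cs: assumes "hermitian_mat n A" "(x::complex vec) \<in> carrier_vec n" "(y::complex vec) \<in> carrier_vec n"
  shows "(A *\<^sub>v x) \<bullet>c y = x \<bullet>c (A *\<^sub>v y)"
proof -
  have A: "A \<in> carrier_mat n n" and h: "\<And>i j. i<n \<Longrightarrow> j<n \<Longrightarrow> A $$ (i,j) = cnj (A $$ (j,i))"
    using assms(1) unfolding hermitian_mat_def by blast+
  have Ax: "A *\<^sub>v x \<in> carrier_vec n" and Ay: "A *\<^sub>v y \<in> carrier_vec n" using A assms by auto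
  have "(A *\<^sub>v x) \<bullet>c y = (\<Sum>i<n. \<Sum>j<n. x$j * (A$$(i,j) * cnj (y$i)))"
    unfolding cs_def'[OF Ax assms(3)]
  proof (rule sum.cong[OF refl])
    fix i assume i: "i \<in> {..<n}"
    have "(A *\<^sub>v x)$i * cnj (y$i) = (\<Sum>j<n. A$$(i,j) * x$j * cnj (y$i))"
      using i by (simp add: matvec_idx[OF A assms(2)] sum_distrib_right)
    also have "\<dots> = (\<Sum>j<n. x$j * (A$$(i,j) * cnj (y$i)))"
      by (rule sum.cong[OF refl]) (simp add: mult_ac)
    finally show "(A *\<^sub>v x)$i * cnj (y$i) = (\<Sum>j<n. x$j * (A$$(i,j) * cnj (y$i)))" .
  qed
  also have "\<dots> = (\<Sum>j<n. \<Sum>i<n. x$j * (A$$(i,j) * cnj (y$i)))"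
    by (rule sum.swap)
  also have "\<dots> = (\<Sum>j<n. x$j * cnj (\<Sum>i<n. A$$(j,i) * y$i))"
  proof (rule sum.cong[OF refl])
    fix j assume j: "j \<in> {..<n}"
    have "cnj (\<Sum>i<n. A$$(j,i) * y$i) = (\<Sum>i<n. A$$(i,j) * cnj (y$i))"
      unfolding cnj_sum
    proof (rule sum.cong[OF refl])
      fix i assume i: "i \<in> {..<n}"
      show "cnj (A$$(j,i) * y$i) = A$$(i,j) * cnj (y$i)" using i j by (simp add: h[of i j])
    qed
    then show "(\<Sum>i<n. x$j * (A$$(i,j) * cnj (y$i))) = x$j * cnj (\<Sum>i<n. A$$(j,i) * y$i)"
      by (simp add: sum_distrib_left)
  qed
  also have "\<dots> = x \<bullet>c (A *\<^sub>v y)"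
    unfolding cs_def'[OF assms(2) Ay] by (rule sum.cong[OF refl]) (simp add: matvec_idx[OF A assms(3)])
  finally show ?thesis .
qed

definition supp_below :: "nat \<Rightarrow> nat \<Rightarrow> complex vec \<Rightarrow> bool" where
  "supp_below n k z \<longleftrightarrow> (\<forall>i. k \<le> i \<longrightarrow> i < n \<longrightarrow> z$i = 0)"

lemma decomp_k:
  assumes A: "A \<in> carrier_mat n n"
  shows "k \<le> n \<Longrightarrow> v \<in> carrier_vec n \<Longrightarrow> \<exists>y r. y \<in> carrier_vec n \<and> r \<in> carrier_vec n \<and> supp_below n k y
     \<and> v = A *\<^sub>v y + r \<and> (\<forall>z \<in> carrier_vec n. supp_below n k z \<longrightarrow> r \<bullet>c (A *\<^sub>v z) = 0)"
proof (induction k arbitrary: v)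
  case 0
  have z0: "z = 0\<^sub>v n" if "z \<in> carrier_vec n" "supp_below n 0 z" for z
    using that unfolding supp_below_def by (intro eq_vecI) auto
  have o: "\<forall>z \<in> carrier_vec n. supp_below n 0 z \<longrightarrow> v \<bullet>c (A *\<^sub>v z) = 0"
  proof (intro ballI impI)
    fix z assume "z \<in> carrier_vec n" "supp_below n 0 z"
    then have "z = 0\<^sub>v n" by (rule z0)
    then show "v \<bullet>c (A *\<^sub>v z) = 0" using A 0 by (simp add: cs_zero_right matvec_zero)
  qed
  have "v = A *\<^sub>v 0\<^sub>v n + v" using A 0 by (simp add: matvec_zero)
  moreover have "supp_below n 0 (0\<^sub>v n)" unfolding supp_below_def by simp
  ultimately show ?case using o 0(2)
    by (intro exI[of _ "0\<^sub>v n"] exI[of _ v] conjI zero_carrier_vec)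
next
  case (Suc k)
  have k: "k < n" "k \<le> n" using Suc by auto
  obtain y r where y: "y \<in> carrier_vec n" and r: "r \<in> carrier_vec n" and ys: "supp_below n k y"
    and vyr: "v = A *\<^sub>v y + r" and ro: "\<forall>z \<in> carrier_vec n. supp_below n k z \<longrightarrow> r \<bullet>c (A *\<^sub>v z) = 0"
    using Suc.IH[OF k(2) Suc.prems(2)] by blast
  define e where "e = (unit_vec n k :: complex vec)"
  have e: "e \<in> carrier_vec n" unfolding e_def by simp
  have Ae: "A *\<^sub>v e \<in> carrier_vec n" using A e by simp
  obtain yc rc where yc: "yc \<in> carrier_vec n" and rc: "rc \<in> carrier_vec n" and ycs: "supp_below n k yc"
    and cyr: "A *\<^sub>v e = A *\<^sub>v yc + rc" and rco: "\<forall>z \<in> carrier_vec n. supp_below n k z \<longrightarrow> rc \<bullet>c (A *\<^sub>v z) = 0"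
    using Suc.IH[OF k(2) Ae] by blast
  define q where "q = e - yc"
  have q: "q \<in> carrier_vec n" unfolding q_def using e yc by simp
  have Aq: "A *\<^sub>v q = rc"
  proof -
    have "A *\<^sub>v q = A *\<^sub>v e - A *\<^sub>v yc" unfolding q_def using A e yc by (rule mult_minus_distrib_mat_vec)
    also have "\<dots> = rc" using cyr yc rc A by auto
    finally show ?thesis .
  qed
  define \<alpha> where "\<alpha> = (r \<bullet>c rc) / (rc \<bullet>c rc)"
  define y' where "y' = y + \<alpha> \<cdot>\<^sub>v q"
  define r' where "r' = r - \<alpha> \<cdot>\<^sub>v rc"
  have y': "y' \<in> carrier_vec n" unfolding y'_def using y q by simp
  have r': "r' \<in> carrier_vec n" unfolding r'_def using r rc by simp
  have qk: "q $ k = 1" unfolding q_def e_def using ycs k yc unfolding supp_below_def by simp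
  have qs: "supp_below n (Suc k) q" unfolding q_def e_def supp_below_def using ycs yc unfolding supp_below_def by auto
  have y's: "supp_below n (Suc k) y'" unfolding y'_def supp_below_def using ys qs y q unfolding supp_below_def by auto
  have Ay': "A *\<^sub>v y' = A *\<^sub>v y + \<alpha> \<cdot>\<^sub>v rc"
    unfolding y'_def using A y q Aq by (simp add: mult_add_distrib_mat_vec mult_mat_vec)
  have v': "v = A *\<^sub>v y' + r'"
    unfolding Ay' r'_def vyr using A y r rc by (intro eq_vecI) auto
  have key: "r \<bullet>c rc - \<alpha> * (rc \<bullet>c rc) = 0"
  proof (cases "rc \<bullet>c rc = 0")
    case True
    then have "Re (rc \<bullet>c rc) = 0" by simp
    then have "rc = 0\<^sub>v n" using cs_self_zero rc by blast
    then show ?thesis using True r by (simp add: cs_zero_right)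
  next
    case False then show ?thesis unfolding \<alpha>_def by simp
  qed
  have o': "r' \<bullet>c (A *\<^sub>v z) = 0" if z: "z \<in> carrier_vec n" and zs: "supp_below n (Suc k) z" for z
  proof -
    define z'' where "z'' = z - (z$k) \<cdot>\<^sub>v q"
    have z'': "z'' \<in> carrier_vec n" unfolding z''_def using z q by simp
    have z''s: "supp_below n k z''"
      unfolding supp_below_def
    proof (intro allI impI)
      fix i assume "k \<le> i" "i < n"
      then consider "i = k" | "Suc k \<le> i" by linarith
      then show "z'' $ i = 0"
      proof cases
        case 1 then show ?thesis unfolding z''_def using z q qk \<open>i < n\<close> by simp
      next
        case 2 then show ?thesis unfolding z''_def using z q qs zs \<open>i < n\<close>
          unfolding supp_below_def by simp
      qed
    qed
    have zz: "z = z'' + (z$k) \<cdot>\<^sub>v q" unfolding z''_def using z q by (intro eq_vecI) auto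
    have Az: "A *\<^sub>v z = A *\<^sub>v z'' + (z$k) \<cdot>\<^sub>v rc"
      by (subst zz) (use A z'' q Aq in \<open>simp add: mult_add_distrib_mat_vec mult_mat_vec\<close>)
    have Az'': "A *\<^sub>v z'' \<in> carrier_vec n" using A z'' by simp
    have "r' \<bullet>c (A *\<^sub>v z) = (r \<bullet>c (A *\<^sub>v z'') + cnj (z$k) * (r \<bullet>c rc))
        - \<alpha> * (rc \<bullet>c (A *\<^sub>v z'') + cnj (z$k) * (rc \<bullet>c rc))"
      unfolding Az r'_def using r rc Az''
      by (simp add: cs_minus_left cs_add_right cs_smult_left cs_smult_right algebra_simps)
    also have "\<dots> = cnj (z$k) * (r \<bullet>c rc - \<alpha> * (rc \<bullet>c rc))"
      using ro rco z'' z''s by (simp add: algebra_simps)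
    also have "\<dots> = 0" using key by simp
    finally show ?thesis .
  qed
  show ?case using y' r' y's v' o' by blast
qed

lemma herm_decomp:
  assumes "hermitian_mat n A" "v \<in> carrier_vec n"
  shows "\<exists>y r. y \<in> carrier_vec n \<and> r \<in> carrier_vec n \<and> v = A *\<^sub>v y + r \<and> A *\<^sub>v r = 0\<^sub>v n"
proof -
  have A: "A \<in> carrier_mat n n" using assms(1) unfolding hermitian_mat_def by blast
  obtain y r where y: "y \<in> carrier_vec n" and r: "r \<in> carrier_vec n" and vyr: "v = A *\<^sub>v y + r"
    and ro: "\<forall>z \<in> carrier_vec n. supp_below n n z \<longrightarrow> r \<bullet>c (A *\<^sub>v z) = 0"
    using decomp_k[OF A _ assms(2), of n] by blast
  have Ar: "A *\<^sub>v r \<in> carrier_vec n" using A r by simp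
  have "r \<bullet>c (A *\<^sub>v (A *\<^sub>v r)) = 0" using ro Ar unfolding supp_below_def by auto
  then have "(A *\<^sub>v r) \<bullet>c (A *\<^sub>v r) = 0" using herm_cs[OF assms(1) r Ar] by simp
  then have "A *\<^sub>v r = 0\<^sub>v n" using cs_self_zero[OF Ar] by simp
  then show ?thesis using y r vyr by blast
qed

lemma herm_carrier: "hermitian_mat n A \<Longrightarrow> A \<in> carrier_mat n n"
  unfolding hermitian_mat_def by blast

lemma herm_RK: assumes "hermitian_mat n A" "t \<in> carrier_vec n" "A *\<^sub>v (A *\<^sub>v t) = 0\<^sub>v n"
  shows "A *\<^sub>v t = 0\<^sub>v n"
proof -
  have A: "A \<in> carrier_mat n n" by (rule herm_carrier[OF assms(1)])
  have At: "A *\<^sub>v t \<in> carrier_vec n" using A assms by simp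
  have "(A *\<^sub>v t) \<bullet>c (A *\<^sub>v t) = t \<bullet>c (A *\<^sub>v (A *\<^sub>v t))" by (rule herm_cs[OF assms(1) assms(2) At])
  also have "\<dots> = 0" using assms(3) assms(2) by (simp add: cs_zero_right)
  finally show ?thesis using cs_self_zero[OF At] by simp
qed

definition P_inv :: "nat \<Rightarrow> complex mat \<Rightarrow> complex mat \<Rightarrow> bool" where
  "P_inv d A X \<longleftrightarrow> X \<in> carrier_mat d d \<and>
      (\<forall>w \<in> supp_op d A. X *\<^sub>v w \<in> supp_op d A \<and> A *\<^sub>v (X *\<^sub>v w) = w) \<and>
      (\<forall>w \<in> carrier_vec d. (\<forall>u \<in> supp_op d A. u \<bullet>c w = 0) \<longrightarrow> X *\<^sub>v w = 0\<^sub>v d)"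

lemma inv_supp_P: "inv_supp d A = (THE X. P_inv d A X)"
  unfolding inv_supp_def P_inv_def by simp

lemma supp_opI: "v \<in> carrier_vec d \<Longrightarrow> A *\<^sub>v v \<in> supp_op d A"
  unfolding supp_op_def by blast

lemma supp_opE: "w \<in> supp_op d A \<Longrightarrow> (\<And>v. v \<in> carrier_vec d \<Longrightarrow> w = A *\<^sub>v v \<Longrightarrow> P) \<Longrightarrow> P"
  unfolding supp_op_def by blast

lemma herm_ZK:
  assumes h: "hermitian_mat d A"
  shows "\<exists>Z K. Z \<in> carrier_mat d d \<and> K \<in> carrier_mat d d \<and>
     (\<forall>w \<in> carrier_vec d. w = A *\<^sub>v (A *\<^sub>v (Z *\<^sub>v w)) + K *\<^sub>v w \<and> A *\<^sub>v (K *\<^sub>v w) = 0\<^sub>v d)"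
proof -
  have A: "A \<in> carrier_mat d d" by (rule herm_carrier[OF h])
  have "\<forall>j. \<exists>zk. j < d \<longrightarrow> fst zk \<in> carrier_vec d \<and> snd zk \<in> carrier_vec d \<and>
      unit_vec d j = A *\<^sub>v (A *\<^sub>v fst zk) + snd zk \<and> A *\<^sub>v snd zk = 0\<^sub>v d"
  proof (intro allI impI)
    fix j
    show "\<exists>zk. j < d \<longrightarrow> fst zk \<in> carrier_vec d \<and> snd zk \<in> carrier_vec d \<and>
      unit_vec d j = A *\<^sub>v (A *\<^sub>v fst zk) + snd zk \<and> A *\<^sub>v snd zk = 0\<^sub>v d"
    proof (cases "j < d")
      case True
      obtain y k where y: "y \<in> carrier_vec d" and k: "k \<in> carrier_vec d"
        and e: "unit_vec d j = A *\<^sub>v y + k" and Ak: "A *\<^sub>v k = 0\<^sub>v d"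
        using herm_decomp[OF h, of "unit_vec d j"] by auto
      obtain z k' where z: "z \<in> carrier_vec d" and k': "k' \<in> carrier_vec d"
        and e': "y = A *\<^sub>v z + k'" and Ak': "A *\<^sub>v k' = 0\<^sub>v d"
        using herm_decomp[OF h y] by auto
      have "A *\<^sub>v y = A *\<^sub>v (A *\<^sub>v z) + A *\<^sub>v k'"
        unfolding e' using A z k' by (simp add: mult_add_distrib_mat_vec)
      then have "A *\<^sub>v y = A *\<^sub>v (A *\<^sub>v z)" using Ak' A z by simp
      then show ?thesis using z k e Ak by (intro exI[of _ "(z,k)"]) auto
    qed simp
  qed
  then obtain f where f: "\<And>j. j < d \<Longrightarrow> fst (f j) \<in> carrier_vec d \<and> snd (f j) \<in> carrier_vec d \<and>
      unit_vec d j = A *\<^sub>v (A *\<^sub>v fst (f j)) + snd (f j) \<and> A *\<^sub>v snd (f j) = 0\<^sub>v d"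
    by metis
  define Z where "Z = mat d d (\<lambda>(i,j). fst (f j) $ i)"
  define K where "K = mat d d (\<lambda>(i,j). snd (f j) $ i)"
  have Z: "Z \<in> carrier_mat d d" and K: "K \<in> carrier_mat d d" unfolding Z_def K_def by auto
  have cZ: "col Z j = fst (f j)" if "j < d" for j
    unfolding Z_def using f[OF that] that by (intro eq_vecI) auto
  have cK: "col K j = snd (f j)" if "j < d" for j
    unfolding K_def using f[OF that] that by (intro eq_vecI) auto
  have M1: "A * (A * Z) + K = 1\<^sub>m d"
  proof (rule mat_eq_by_col)
    show "A * (A * Z) + K \<in> carrier_mat d d" using A Z K by simp
    show "1\<^sub>m d \<in> carrier_mat d d" by simp
    fix j assume j: "j < d"
    have "col (A * (A * Z) + K) j = col (A * (A * Z)) j + col K j"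
      by (rule col_add) (use A Z K j in auto)
    also have "\<dots> = A *\<^sub>v (A *\<^sub>v fst (f j)) + snd (f j)"
    proof -
      have AZ: "A * Z \<in> carrier_mat d d" using A Z by simp
      show ?thesis using j by (simp add: col_mult2[OF A AZ j] col_mult2[OF A Z j] cZ cK)
    qed
    also have "\<dots> = col (1\<^sub>m d) j" using f[OF j] j by (simp add: col_one)
    finally show "col (A * (A * Z) + K) j = col (1\<^sub>m d) j" .
  qed
  have M2: "A * K = 0\<^sub>m d d"
  proof (rule mat_eq_by_col)
    show "A * K \<in> carrier_mat d d" using A K by simp
    show "0\<^sub>m d d \<in> carrier_mat d d" by simp
    fix j assume j: "j < d"
    show "col (A * K) j = col (0\<^sub>m d d) j"
      using A K j f[OF j] by (simp add: col_mult2 cK)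
  qed
  have W: "w = A *\<^sub>v (A *\<^sub>v (Z *\<^sub>v w)) + K *\<^sub>v w \<and> A *\<^sub>v (K *\<^sub>v w) = 0\<^sub>v d"
    if w: "w \<in> carrier_vec d" for w
  proof
    have "w = (A * (A * Z) + K) *\<^sub>v w" using M1 w by simp
    also have "\<dots> = (A * (A * Z)) *\<^sub>v w + K *\<^sub>v w"
      by (rule add_mult_distrib_mat_vec) (use A Z K w in auto)
    also have "(A * (A * Z)) *\<^sub>v w = A *\<^sub>v (A *\<^sub>v (Z *\<^sub>v w))"
    proof -
      have AZ: "A * Z \<in> carrier_mat d d" using A Z by simp
      show ?thesis by (simp add: assoc_mult_mat_vec[OF A AZ w] assoc_mult_mat_vec[OF A Z w])
    qed
    finally show "w = A *\<^sub>v (A *\<^sub>v (Z *\<^sub>v w)) + K *\<^sub>v w" .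
    have "A *\<^sub>v (K *\<^sub>v w) = (A * K) *\<^sub>v w" by (simp add: assoc_mult_mat_vec[OF A K w])
    also have "\<dots> = 0\<^sub>v d" using M2 w by (simp add: matvec_zero_mat)
    finally show "A *\<^sub>v (K *\<^sub>v w) = 0\<^sub>v d" .
  qed
  show ?thesis using Z K W by blast
qed

lemma vec_eq_diff: "a \<in> carrier_vec n \<Longrightarrow> b \<in> carrier_vec n \<Longrightarrow> w = a + b \<Longrightarrow> w - a = (b :: complex vec)"
  by (intro eq_vecI) auto

lemma supp_carrier: assumes "hermitian_mat d A" "u \<in> supp_op d A" shows "u \<in> carrier_vec d"
proof -
  from assms(2) obtain v where "v \<in> carrier_vec d" "u = A *\<^sub>v v" by (rule supp_opE)
  then show ?thesis using herm_carrier[OF assms(1)] by simp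
qed

lemma supp_inj: assumes h: "hermitian_mat d A" and a: "a \<in> supp_op d A" and b: "b \<in> supp_op d A"
  and e: "A *\<^sub>v a = A *\<^sub>v b" shows "a = b"
proof -
  have A: "A \<in> carrier_mat d d" by (rule herm_carrier[OF h])
  obtain s1 where s1: "s1 \<in> carrier_vec d" "a = A *\<^sub>v s1" using a by (rule supp_opE)
  obtain s2 where s2: "s2 \<in> carrier_vec d" "b = A *\<^sub>v s2" using b by (rule supp_opE)
  have s12: "s1 - s2 \<in> carrier_vec d" using s1 s2 by simp
  have "A *\<^sub>v (s1 - s2) = a - b" using s1 s2 A by (simp add: mult_minus_distrib_mat_vec)
  moreover have "A *\<^sub>v (a - b) = 0\<^sub>v d"
    using A s1 s2 e by (simp add: mult_minus_distrib_mat_vec)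
  ultimately have "A *\<^sub>v (A *\<^sub>v (s1 - s2)) = 0\<^sub>v d" by simp
  then have "A *\<^sub>v (s1 - s2) = 0\<^sub>v d" by (rule herm_RK[OF h s12])
  then have "a - b = 0\<^sub>v d" using \<open>A *\<^sub>v (s1 - s2) = a - b\<close> by simp
  have ac: "a \<in> carrier_vec d" and bc: "b \<in> carrier_vec d" using s1 s2 A by auto
  show ?thesis
  proof (rule eq_vecI)
    fix i assume i: "i < dim_vec b"
    have "(a - b) $ i = 0\<^sub>v d $ i" using \<open>a - b = 0\<^sub>v d\<close> by simp
    then show "a $ i = b $ i" using i ac bc by simp
  qed (use ac bc in simp)
qed

lemma ker_orth: assumes h: "hermitian_mat d A" and k: "k \<in> carrier_vec d" and Ak: "A *\<^sub>v k = 0\<^sub>v d"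
  shows "\<forall>u \<in> supp_op d A. u \<bullet>c k = 0"
proof
  fix u assume "u \<in> supp_op d A"
  then obtain s where s: "s \<in> carrier_vec d" "u = A *\<^sub>v s" by (rule supp_opE)
  show "u \<bullet>c k = 0" unfolding s(2) using herm_cs[OF h s(1) k] Ak s(1) by (simp add: cs_zero_right)
qed

lemma herm_inv_supp: assumes h: "hermitian_mat d A" shows "P_inv d A (inv_supp d A)"
proof -
  have A: "A \<in> carrier_mat d d" by (rule herm_carrier[OF h])
  obtain Z K where Z: "Z \<in> carrier_mat d d" and K: "K \<in> carrier_mat d d"
    and W: "\<And>w. w \<in> carrier_vec d \<Longrightarrow> w = A *\<^sub>v (A *\<^sub>v (Z *\<^sub>v w)) + K *\<^sub>v w \<and> A *\<^sub>v (K *\<^sub>v w) = 0\<^sub>v d"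
    using herm_ZK[OF h] by blast
  define X where "X = A * Z"
  have X: "X \<in> carrier_mat d d" unfolding X_def using A Z by simp
  have Xw: "X *\<^sub>v w = A *\<^sub>v (Z *\<^sub>v w)" if "w \<in> carrier_vec d" for w
    unfolding X_def by (rule assoc_mult_mat_vec[OF A Z that])
  have Kw: "K *\<^sub>v w \<in> carrier_vec d" if "w \<in> carrier_vec d" for w using K that by simp
  have Zw: "Z *\<^sub>v w \<in> carrier_vec d" if "w \<in> carrier_vec d" for w using Z that by simp
  have AZw: "A *\<^sub>v (Z *\<^sub>v w) \<in> carrier_vec d" if "w \<in> carrier_vec d" for w using A Z that by simp
  have AAZw: "A *\<^sub>v (A *\<^sub>v (Z *\<^sub>v w)) \<in> carrier_vec d" if "w \<in> carrier_vec d" for w using A Z that by simp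
  have Kdiff: "w - A *\<^sub>v (A *\<^sub>v (Z *\<^sub>v w)) = K *\<^sub>v w" if w: "w \<in> carrier_vec d" for w
    by (rule vec_eq_diff[OF AAZw[OF w] Kw[OF w]]) (use W[OF w] in blast)
  have Kdiff2: "w - K *\<^sub>v w = A *\<^sub>v (A *\<^sub>v (Z *\<^sub>v w))" if w: "w \<in> carrier_vec d" for w
  proof -
    have "w = A *\<^sub>v (A *\<^sub>v (Z *\<^sub>v w)) + K *\<^sub>v w" using W[OF w] by blast
    also have "\<dots> = K *\<^sub>v w + A *\<^sub>v (A *\<^sub>v (Z *\<^sub>v w))" by (rule comm_add_vec[OF AAZw[OF w] Kw[OF w]])
    finally have "w = K *\<^sub>v w + A *\<^sub>v (A *\<^sub>v (Z *\<^sub>v w))" .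
    then show ?thesis by (rule vec_eq_diff[OF Kw[OF w] AAZw[OF w]])
  qed
  have Korth: "\<forall>u \<in> supp_op d A. u \<bullet>c (K *\<^sub>v w) = 0" if w: "w \<in> carrier_vec d" for w
    by (rule ker_orth[OF h Kw[OF w]]) (use W[OF w] in blast)
  have PX: "P_inv d A X"
    unfolding P_inv_def
  proof (intro conjI ballI impI)
    show "X \<in> carrier_mat d d" by (rule X)
  next
    fix w assume ws: "w \<in> supp_op d A"
    then obtain s where s: "s \<in> carrier_vec d" "w = A *\<^sub>v s" by (rule supp_opE)
    have w: "w \<in> carrier_vec d" using s A by simp
    show "X *\<^sub>v w \<in> supp_op d A" unfolding Xw[OF w] by (rule supp_opI[OF Zw[OF w]])
    define t where "t = s - A *\<^sub>v (Z *\<^sub>v w)"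
    have t: "t \<in> carrier_vec d" unfolding t_def using s AZw[OF w] by simp
    have At: "A *\<^sub>v t = K *\<^sub>v w"
      unfolding t_def using A s(1) AZw[OF w] Kdiff[OF w] s(2) by (simp add: mult_minus_distrib_mat_vec)
    have "A *\<^sub>v (A *\<^sub>v t) = 0\<^sub>v d" unfolding At using W[OF w] by blast
    then have "A *\<^sub>v t = 0\<^sub>v d" by (rule herm_RK[OF h t])
    then have K0: "K *\<^sub>v w = 0\<^sub>v d" using At by simp
    have e: "w = A *\<^sub>v (A *\<^sub>v (Z *\<^sub>v w)) + K *\<^sub>v w" using W[OF w] by blast
    have e': "w = A *\<^sub>v (A *\<^sub>v (Z *\<^sub>v w)) + 0\<^sub>v d" using e unfolding K0 .
    have "A *\<^sub>v (X *\<^sub>v w) = A *\<^sub>v (A *\<^sub>v (Z *\<^sub>v w)) + 0\<^sub>v d"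
      using right_zero_vec[OF AAZw[OF w]] Xw[OF w] by simp
    also have "\<dots> = w" using e' by (rule sym)
    finally show "A *\<^sub>v (X *\<^sub>v w) = w" .
  next
    fix w assume w: "w \<in> carrier_vec d" and orth: "\<forall>u\<in>supp_op d A. u \<bullet>c w = 0"
    define r where "r = A *\<^sub>v (A *\<^sub>v (Z *\<^sub>v w))"
    have r: "r \<in> carrier_vec d" unfolding r_def by (rule AAZw[OF w])
    have rs: "r \<in> supp_op d A" unfolding r_def by (rule supp_opI[OF AZw[OF w]])
    have "r \<bullet>c r = r \<bullet>c (w - K *\<^sub>v w)" unfolding Kdiff2[OF w] r_def ..
    also have "\<dots> = r \<bullet>c w - r \<bullet>c (K *\<^sub>v w)" by (rule cs_minus_right[OF r w Kw[OF w]])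
    also have "\<dots> = 0" using orth rs Korth[OF w] by simp
    finally have "r = 0\<^sub>v d" using cs_self_zero[OF r] by simp
    then have "A *\<^sub>v (Z *\<^sub>v w) = 0\<^sub>v d" unfolding r_def by (rule herm_RK[OF h Zw[OF w]])
    then show "X *\<^sub>v w = 0\<^sub>v d" using Xw[OF w] by simp
  qed
  have uniq: "Y = X" if PY: "P_inv d A Y" for Y
  proof (rule mat_eq_by_vec)
    show "Y \<in> carrier_mat d d" using PY unfolding P_inv_def by blast
    show "X \<in> carrier_mat d d" by (rule X)
    fix w :: "complex vec" assume w: "w \<in> carrier_vec d"
    define r where "r = A *\<^sub>v (A *\<^sub>v (Z *\<^sub>v w))"
    have r: "r \<in> carrier_vec d" unfolding r_def by (rule AAZw[OF w])
    have rs: "r \<in> supp_op d A" unfolding r_def by (rule supp_opI[OF AZw[OF w]])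
    have wr: "w = r + K *\<^sub>v w" unfolding r_def using W[OF w] by blast
    have Y: "Y \<in> carrier_mat d d" using PY unfolding P_inv_def by blast
    have YK: "Y *\<^sub>v (K *\<^sub>v w) = 0\<^sub>v d" using PY Korth[OF w] Kw[OF w] unfolding P_inv_def by blast
    have XK: "X *\<^sub>v (K *\<^sub>v w) = 0\<^sub>v d" using PX Korth[OF w] Kw[OF w] unfolding P_inv_def by blast
    have Yr: "Y *\<^sub>v r \<in> supp_op d A" "A *\<^sub>v (Y *\<^sub>v r) = r" using PY rs unfolding P_inv_def by blast+
    have Xr: "X *\<^sub>v r \<in> supp_op d A" "A *\<^sub>v (X *\<^sub>v r) = r" using PX rs unfolding P_inv_def by blast+
    have YX: "Y *\<^sub>v r = X *\<^sub>v r" by (rule supp_inj[OF h Yr(1) Xr(1)]) (simp add: Yr(2) Xr(2))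
    have "Y *\<^sub>v w = Y *\<^sub>v (r + K *\<^sub>v w)" by (rule arg_cong[where f="\<lambda>v. Y *\<^sub>v v", OF wr])
    also have "\<dots> = Y *\<^sub>v r + Y *\<^sub>v (K *\<^sub>v w)" by (rule mult_add_distrib_mat_vec[OF Y r Kw[OF w]])
    also have "\<dots> = X *\<^sub>v r + X *\<^sub>v (K *\<^sub>v w)" using YK XK YX by simp
    also have "\<dots> = X *\<^sub>v (r + K *\<^sub>v w)" by (rule mult_add_distrib_mat_vec[OF X r Kw[OF w], symmetric])
    also have "\<dots> = X *\<^sub>v w" by (rule arg_cong[where f="\<lambda>v. X *\<^sub>v v", OF wr[symmetric]])
    finally show "Y *\<^sub>v w = X *\<^sub>v w" .
  qed
  have "inv_supp d A = X" unfolding inv_supp_P by (rule the_equality[where P="P_inv d A", OF PX uniq])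
  then show ?thesis using PX by simp
qed

lemma matmul_idx: "A \<in> carrier_mat n n \<Longrightarrow> B \<in> carrier_mat n n \<Longrightarrow> i < n \<Longrightarrow> j < n \<Longrightarrow>
  (A * B) $$ (i,j) = (\<Sum>k<n. A$$(i,k) * (B :: complex mat)$$(k,j))"
  by (auto simp: scalar_prod_def atLeast0LessThan intro!: sum.cong)

lemma trace_herm: assumes h: "hermitian_mat n D" and X: "X \<in> carrier_mat n n"
  shows "mtrace (D * D * X) = (\<Sum>l<n. (X *\<^sub>v col D l) \<bullet>c col D l)"
proof -
  have D: "D \<in> carrier_mat n n" by (rule herm_carrier[OF h])
  have hh: "\<forall>i<n. \<forall>j<n. D $$ (i,j) = cnj (D $$ (j,i))" using h unfolding hermitian_mat_def by blast
  have h': "cnj (D$$(i,j)) = D$$(j,i)" if "i < n" "j < n" for i j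
  proof -
    have "D $$ (j,i) = cnj (D $$ (i,j))" using hh that by blast
    then show ?thesis by simp
  qed
  have DD: "D * D \<in> carrier_mat n n" using D by simp
  have L: "mtrace (D*D*X) = (\<Sum>i<n. \<Sum>j<n. \<Sum>l<n. D$$(i,l) * D$$(l,j) * X$$(j,i))"
  proof -
    have "dim_row (D*D*X) = n" using D by simp
    then have "mtrace (D*D*X) = (\<Sum>i<n. (D*D*X)$$(i,i))" unfolding mtrace_def by simp
    also have "\<dots> = (\<Sum>i<n. \<Sum>j<n. \<Sum>l<n. D$$(i,l) * D$$(l,j) * X$$(j,i))"
    proof (rule sum.cong[OF refl])
      fix i assume i: "i \<in> {..<n}"
      have "(D*D*X)$$(i,i) = (\<Sum>j<n. (D*D)$$(i,j) * X$$(j,i))" using i by (simp add: matmul_idx[OF DD X])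
      also have "\<dots> = (\<Sum>j<n. \<Sum>l<n. D$$(i,l) * D$$(l,j) * X$$(j,i))"
        using i by (intro sum.cong[OF refl]) (simp add: matmul_idx[OF D D] sum_distrib_right)
      finally show "(D*D*X)$$(i,i) = (\<Sum>j<n. \<Sum>l<n. D$$(i,l) * D$$(l,j) * X$$(j,i))" .
    qed
    finally show ?thesis .
  qed
  have R: "(\<Sum>l<n. (X *\<^sub>v col D l) \<bullet>c col D l) = (\<Sum>l<n. \<Sum>i<n. \<Sum>j<n. X$$(i,j) * D$$(j,l) * D$$(l,i))"
  proof (rule sum.cong[OF refl])
    fix l assume l: "l \<in> {..<n}"
    have c: "col D l \<in> carrier_vec n" using D by (intro carrier_vecI) simp
    have Xc: "X *\<^sub>v col D l \<in> carrier_vec n" using X c by simp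
    have "(X *\<^sub>v col D l) \<bullet>c col D l = (\<Sum>i<n. (X *\<^sub>v col D l)$i * cnj (col D l $ i))"
      by (rule cs_def'[OF Xc c])
    also have "\<dots> = (\<Sum>i<n. \<Sum>j<n. X$$(i,j) * D$$(j,l) * D$$(l,i))"
    proof (rule sum.cong[OF refl])
      fix i assume i: "i \<in> {..<n}"
      have "(X *\<^sub>v col D l)$i = (\<Sum>j<n. X$$(i,j) * col D l $ j)" by (rule matvec_idx[OF X c]) (use i in simp)
      also have "\<dots> = (\<Sum>j<n. X$$(i,j) * D$$(j,l))" using D l by (intro sum.cong[OF refl]) simp
      finally have e1: "(X *\<^sub>v col D l)$i = (\<Sum>j<n. X$$(i,j) * D$$(j,l))" .
      have cD: "col D l $ i = D$$(i,l)" using D i l by simp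
      have e2: "cnj (col D l $ i) = D$$(l,i)" unfolding cD using i l by (intro h') simp_all
      show "(X *\<^sub>v col D l)$i * cnj (col D l $ i) = (\<Sum>j<n. X$$(i,j) * D$$(j,l) * D$$(l,i))"
        unfolding e1 e2 by (simp add: sum_distrib_right)
    qed
    finally show "(X *\<^sub>v col D l) \<bullet>c col D l = (\<Sum>i<n. \<Sum>j<n. X$$(i,j) * D$$(j,l) * D$$(l,i))" .
  qed
  have "(\<Sum>l<n. \<Sum>i<n. \<Sum>j<n. X$$(i,j) * D$$(j,l) * D$$(l,i)) = (\<Sum>i<n. \<Sum>l<n. \<Sum>j<n. X$$(i,j) * D$$(j,l) * D$$(l,i))"
    by (rule sum.swap)
  also have "\<dots> = (\<Sum>i<n. \<Sum>j<n. \<Sum>l<n. X$$(i,j) * D$$(j,l) * D$$(l,i))"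
    by (rule sum.cong[OF refl], rule sum.swap)
  also have "\<dots> = (\<Sum>j<n. \<Sum>i<n. \<Sum>l<n. D$$(i,l) * D$$(l,j) * X$$(j,i))"
    by (rule sum.cong[OF refl])+ (simp only: mult_ac)
  also have "\<dots> = (\<Sum>i<n. \<Sum>j<n. \<Sum>l<n. D$$(i,l) * D$$(l,j) * X$$(j,i))"
    by (rule sum.swap)
  finally have F: "(\<Sum>l<n. \<Sum>i<n. \<Sum>j<n. X$$(i,j) * D$$(j,l) * D$$(l,i)) = (\<Sum>i<n. \<Sum>j<n. \<Sum>l<n. D$$(i,l) * D$$(l,j) * X$$(j,i))" .
  show ?thesis unfolding L R using F by (rule sym)
qed

lemma real_cnj: "Im z = 0 \<Longrightarrow> cnj z = z"
  by (simp add: complex_eq_iff)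

lemma pv_nonneg:
  assumes h: "hermitian_mat n A"
    and psd: "\<And>x. x \<in> carrier_vec n \<Longrightarrow> Im ((A *\<^sub>v x) \<bullet>c x) = 0 \<and> 0 \<le> Re ((A *\<^sub>v x) \<bullet>c x)"
    and a: "a > 0" and b: "b > 0" and v: "v \<in> carrier_vec n" and w: "w \<in> carrier_vec n"
    and eq: "of_real a \<cdot>\<^sub>v (A *\<^sub>v w) + of_real b \<cdot>\<^sub>v w = of_real a \<cdot>\<^sub>v v"
  shows "b * Re (w \<bullet>c w) \<le> Re (w \<bullet>c (of_real a \<cdot>\<^sub>v v))"
proof -
  have A: "A \<in> carrier_mat n n" by (rule herm_carrier[OF h])
  have Aw: "A *\<^sub>v w \<in> carrier_vec n" using A w by simp
  have "w \<bullet>c (of_real a \<cdot>\<^sub>v v) = w \<bullet>c (of_real a \<cdot>\<^sub>v (A *\<^sub>v w) + of_real b \<cdot>\<^sub>v w)" unfolding eq ..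
  also have "\<dots> = of_real a * (w \<bullet>c (A *\<^sub>v w)) + of_real b * (w \<bullet>c w)"
    using w Aw by (simp add: cs_add_right cs_smult_right)
  finally have e0: "w \<bullet>c (of_real a \<cdot>\<^sub>v v) = of_real a * (w \<bullet>c (A *\<^sub>v w)) + of_real b * (w \<bullet>c w)" .
  have e1: "w \<bullet>c (A *\<^sub>v w) = (A *\<^sub>v w) \<bullet>c w" using herm_cs[OF h w w] by simp
  have e: "Re (w \<bullet>c (of_real a \<cdot>\<^sub>v v)) = a * Re ((A *\<^sub>v w) \<bullet>c w) + b * Re (w \<bullet>c w)"
    unfolding e0 e1 by simp
  have "0 \<le> a * Re ((A *\<^sub>v w) \<bullet>c w)" using psd[OF w] a by simp
  then show ?thesis unfolding e by simp
qed

lemma pv_idx: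
  assumes A: "A \<in> carrier_mat n n" and v: "v \<in> carrier_vec n" and w: "w \<in> carrier_vec n"
    and eq: "of_real a \<cdot>\<^sub>v (A *\<^sub>v w) + of_real b \<cdot>\<^sub>v w = of_real a \<cdot>\<^sub>v v" and i: "i < n"
  shows "of_real a * (A *\<^sub>v w)$i + of_real b * w$i = of_real a * v$i"
proof -
  have "(of_real a \<cdot>\<^sub>v (A *\<^sub>v w) + of_real b \<cdot>\<^sub>v w) $ i = (of_real a \<cdot>\<^sub>v v) $ i" using eq by (rule arg_cong)
  then show ?thesis using A v w i by simp
qed

lemma sqrt_bound: assumes "N \<le> sqrt N * S" "0 \<le> N" "0 \<le> S" shows "sqrt N \<le> (S::real)"
proof (cases "N = 0")
  case True then show ?thesis using assms by simp
next
  case False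
  then have p: "sqrt N > 0" using assms by simp
  have "sqrt N * sqrt N \<le> sqrt N * S" using assms by simp
  then show ?thesis using p by (rule mult_left_le_imp_le)
qed

lemma pv_supp:
  assumes h: "hermitian_mat n A"
    and psd: "\<And>x. x \<in> carrier_vec n \<Longrightarrow> Im ((A *\<^sub>v x) \<bullet>c x) = 0 \<and> 0 \<le> Re ((A *\<^sub>v x) \<bullet>c x)"
    and a: "a > 0" and b: "b > 0" and v: "v \<in> carrier_vec n" and w: "w \<in> carrier_vec n"
    and eq: "of_real a \<cdot>\<^sub>v (A *\<^sub>v w) + of_real b \<cdot>\<^sub>v w = of_real a \<cdot>\<^sub>v v"
    and u: "u \<in> carrier_vec n" and vu: "v = A *\<^sub>v u"
  shows "cmod (w \<bullet>c (of_real a \<cdot>\<^sub>v v) - of_real a * (u \<bullet>c v)) \<le> b * (\<Sum>i<n. cmod (u$i))\<^sup>2"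
proof -
  have A: "A \<in> carrier_mat n n" by (rule herm_carrier[OF h])
  have Aw: "A *\<^sub>v w \<in> carrier_vec n" using A w by simp
  have ix: "of_real a * (A *\<^sub>v w)$i + of_real b * w$i = of_real a * v$i" if "i < n" for i
    by (rule pv_idx[OF A v w eq that])
  have aAw: "of_real a \<cdot>\<^sub>v (A *\<^sub>v w) = of_real a \<cdot>\<^sub>v v - of_real b \<cdot>\<^sub>v w"
  proof (rule eq_vecI)
    fix i assume "i < dim_vec (of_real a \<cdot>\<^sub>v v - of_real b \<cdot>\<^sub>v w)"
    then have i: "i < n" using v w by simp
    have "of_real a * (A *\<^sub>v w)$i = of_real a * v$i - of_real b * w$i" using ix[OF i] by (simp add: algebra_simps)
    then show "(of_real a \<cdot>\<^sub>v (A *\<^sub>v w)) $ i = (of_real a \<cdot>\<^sub>v v - of_real b \<cdot>\<^sub>v w) $ i"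
      using i v w Aw A by simp
  qed (use v w Aw A in simp)
  have "w \<bullet>c (of_real a \<cdot>\<^sub>v v) = of_real a * (w \<bullet>c v)" using w v by (simp add: cs_smult_right)
  also have "w \<bullet>c v = (A *\<^sub>v w) \<bullet>c u" unfolding vu using herm_cs[OF h w u] by simp
  also have "of_real a * ((A *\<^sub>v w) \<bullet>c u) = (of_real a \<cdot>\<^sub>v (A *\<^sub>v w)) \<bullet>c u"
    using Aw u by (simp add: cs_smult_left)
  also have "\<dots> = (of_real a \<cdot>\<^sub>v v - of_real b \<cdot>\<^sub>v w) \<bullet>c u" unfolding aAw ..
  also have "\<dots> = of_real a * (v \<bullet>c u) - of_real b * (w \<bullet>c u)"
    using v w u by (simp add: cs_minus_left cs_smult_left)
  finally have t1: "w \<bullet>c (of_real a \<cdot>\<^sub>v v) = of_real a * (v \<bullet>c u) - of_real b * (w \<bullet>c u)" .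
  have "Im (v \<bullet>c u) = 0" unfolding vu using psd[OF u] by simp
  then have "cnj (v \<bullet>c u) = v \<bullet>c u" by (rule real_cnj)
  moreover have "u \<bullet>c v = cnj (v \<bullet>c u)" by (rule cs_swap[OF v u])
  ultimately have vuc: "v \<bullet>c u = u \<bullet>c v" by simp
  have t2: "w \<bullet>c (of_real a \<cdot>\<^sub>v v) - of_real a * (u \<bullet>c v) = - (of_real b * (w \<bullet>c u))"
    unfolding t1 vuc by simp
  define e where "e = w - u"
  have e: "e \<in> carrier_vec n" unfolding e_def using w u by simp
  have Ae: "A *\<^sub>v e \<in> carrier_vec n" using A e by simp
  have aAe: "of_real a \<cdot>\<^sub>v (A *\<^sub>v e) = of_real (- b) \<cdot>\<^sub>v w"
  proof (rule eq_vecI)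
    fix i assume "i < dim_vec (of_real (- b) \<cdot>\<^sub>v w)"
    then have i: "i < n" using w by simp
    have Aei: "(A *\<^sub>v e)$i = (A *\<^sub>v w)$i - (A *\<^sub>v u)$i"
      unfolding e_def using A w u i by (simp add: mult_minus_distrib_mat_vec)
    have vi: "v$i = (A *\<^sub>v u)$i" unfolding vu ..
    show "(of_real a \<cdot>\<^sub>v (A *\<^sub>v e)) $ i = (of_real (- b) \<cdot>\<^sub>v w) $ i"
      using i Ae w ix[OF i] A unfolding vi by (simp add: Aei algebra_simps)
  qed (use Ae w A in simp)
  have "of_real a * ((A *\<^sub>v e) \<bullet>c e) = (of_real a \<cdot>\<^sub>v (A *\<^sub>v e)) \<bullet>c e" using Ae e by (simp add: cs_smult_left)
  also have "\<dots> = of_real (-b) * (w \<bullet>c e)" unfolding aAe using w e by (simp add: cs_smult_left)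
  also have "w \<bullet>c e = w \<bullet>c w - w \<bullet>c u" unfolding e_def by (rule cs_minus_right[OF w w u])
  finally have qe: "of_real a * ((A *\<^sub>v e) \<bullet>c e) = of_real (- b) * (w \<bullet>c w - w \<bullet>c u)" .
  have "0 \<le> a * Re ((A *\<^sub>v e) \<bullet>c e)" using psd[OF e] a by simp
  also have "a * Re ((A *\<^sub>v e) \<bullet>c e) = Re (of_real a * ((A *\<^sub>v e) \<bullet>c e))" by simp
  also have "\<dots> = - b * (Re (w \<bullet>c w) - Re (w \<bullet>c u))" unfolding qe by simp
  finally have "0 \<le> - b * (Re (w \<bullet>c w) - Re (w \<bullet>c u))" .
  then have N1: "Re (w \<bullet>c w) \<le> Re (w \<bullet>c u)" using b by (simp add: mult_le_0_iff)
  define S where "S = (\<Sum>i<n. cmod (u$i))"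
  have S0: "0 \<le> S" unfolding S_def by (simp add: sum_nonneg)
  have cb: "cmod (w \<bullet>c u) \<le> sqrt (Re (w \<bullet>c w)) * S" unfolding S_def by (rule cs_bound[OF w u])
  have "Re (w \<bullet>c w) \<le> sqrt (Re (w \<bullet>c w)) * S"
    using N1 cb complex_Re_le_cmod[of "w \<bullet>c u"] by linarith
  then have sN: "sqrt (Re (w \<bullet>c w)) \<le> S" using sqrt_bound cs_self_nonneg[OF w] S0 by blast
  have "cmod (w \<bullet>c u) \<le> S * S" using cb sN S0 by (meson mult_right_mono order_trans)
  then have "b * cmod (w \<bullet>c u) \<le> b * S\<^sup>2" using b by (simp add: power2_eq_square)
  moreover have "cmod (w \<bullet>c (of_real a \<cdot>\<^sub>v v) - of_real a * (u \<bullet>c v)) = b * cmod (w \<bullet>c u)"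
    unfolding t2 using b by (simp add: norm_mult)
  ultimately show ?thesis unfolding S_def by simp
qed

lemma pv_unsupp:
  assumes h: "hermitian_mat n A"
    and psd: "\<And>x. x \<in> carrier_vec n \<Longrightarrow> Im ((A *\<^sub>v x) \<bullet>c x) = 0 \<and> 0 \<le> Re ((A *\<^sub>v x) \<bullet>c x)"
    and a: "a > 0" and b: "b > 0" and v: "v \<in> carrier_vec n" and w: "w \<in> carrier_vec n"
    and eq: "of_real a \<cdot>\<^sub>v (A *\<^sub>v w) + of_real b \<cdot>\<^sub>v w = of_real a \<cdot>\<^sub>v v"
    and y: "y \<in> carrier_vec n" and k: "k \<in> carrier_vec n" and vyk: "v = A *\<^sub>v y + k"
    and Ak: "A *\<^sub>v k = 0\<^sub>v n" and k0: "k \<noteq> 0\<^sub>v n"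
  shows "a\<^sup>2 * (Re (k \<bullet>c k))\<^sup>2 / (b * (\<Sum>i<n. cmod (k$i))\<^sup>2) \<le> Re (w \<bullet>c (of_real a \<cdot>\<^sub>v v))"
proof -
  have A: "A \<in> carrier_mat n n" by (rule herm_carrier[OF h])
  have Aw: "A *\<^sub>v w \<in> carrier_vec n" using A w by simp
  have Ay: "A *\<^sub>v y \<in> carrier_vec n" using A y by simp
  have "(of_real a \<cdot>\<^sub>v (A *\<^sub>v w) + of_real b \<cdot>\<^sub>v w) \<bullet>c k = of_real a * ((A *\<^sub>v w) \<bullet>c k) + of_real b * (w \<bullet>c k)"
    using Aw w k by (simp add: cs_add_left cs_smult_left)
  also have "(A *\<^sub>v w) \<bullet>c k = 0" using herm_cs[OF h w k] Ak w by (simp add: cs_zero_right)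
  finally have l1: "(of_real a \<cdot>\<^sub>v v) \<bullet>c k = of_real b * (w \<bullet>c k)" unfolding eq by simp
  have "(of_real a \<cdot>\<^sub>v v) \<bullet>c k = of_real a * (v \<bullet>c k)" using v k by (simp add: cs_smult_left)
  also have "v \<bullet>c k = (A *\<^sub>v y) \<bullet>c k + k \<bullet>c k" unfolding vyk by (rule cs_add_left[OF Ay k k])
  also have "(A *\<^sub>v y) \<bullet>c k = 0" using herm_cs[OF h y k] Ak y by (simp add: cs_zero_right)
  finally have l2: "(of_real a \<cdot>\<^sub>v v) \<bullet>c k = of_real a * (k \<bullet>c k)" by simp
  define K2 where "K2 = Re (k \<bullet>c k)"
  have kk: "k \<bullet>c k = of_real K2" unfolding K2_def using cs_self_Im[OF k] by (simp add: complex_eq_iff)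
  have K2p: "K2 > 0"
  proof -
    have "K2 \<ge> 0" unfolding K2_def by (rule cs_self_nonneg[OF k])
    moreover have "K2 \<noteq> 0" using cs_self_zero[OF k] k0 unfolding K2_def by blast
    ultimately show ?thesis by simp
  qed
  have "of_real b * (w \<bullet>c k) = of_real (a * K2)" using l1 l2 kk by simp
  then have "b * cmod (w \<bullet>c k) = a * K2"
    using a b K2p by (metis abs_of_pos mult_pos_pos norm_mult norm_of_real)
  define T where "T = (\<Sum>i<n. cmod (k$i))"
  define N where "N = Re (w \<bullet>c w)"
  have N0: "0 \<le> N" unfolding N_def by (rule cs_self_nonneg[OF w])
  have T0: "0 \<le> T" unfolding T_def by (simp add: sum_nonneg)
  have cb: "cmod (w \<bullet>c k) \<le> sqrt N * T" unfolding T_def N_def by (rule cs_bound[OF w k])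
  have aK: "a * K2 \<le> b * (sqrt N * T)" using \<open>b * cmod (w \<bullet>c k) = a * K2\<close> cb b by (metis mult_left_mono less_imp_le)
  have aKp: "a * K2 > 0" using a K2p by simp
  have Tp: "T > 0"
  proof (rule ccontr)
    assume "\<not> T > 0" then have "T = 0" using T0 by simp
    then show False using aK aKp by simp
  qed
  have bT: "b * T > 0" using b Tp by simp
  have q: "a * K2 / (b * T) \<le> sqrt N" using aK bT by (simp add: divide_le_eq mult_ac)
  have "(a * K2 / (b * T))\<^sup>2 \<le> (sqrt N)\<^sup>2" using q aKp bT by (intro power_mono) simp_all
  then have "(a * K2 / (b * T))\<^sup>2 \<le> N" using N0 by simp
  then have "b * (a * K2 / (b * T))\<^sup>2 \<le> b * N" using b by simp
  also have "b * N \<le> Re (w \<bullet>c (of_real a \<cdot>\<^sub>v v))" unfolding N_def by (rule pv_nonneg[OF h psd a b v w eq])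
  also have "b * (a * K2 / (b * T))\<^sup>2 = a\<^sup>2 * K2\<^sup>2 / (b * T\<^sup>2)"
    using b Tp by (simp add: power2_eq_square field_simps)
  finally show ?thesis unfolding K2_def T_def by simp
qed

lemma depol_mv: fixes A :: "complex mat" assumes A: "A \<in> carrier_mat n n" and w: "w \<in> carrier_vec n"
  shows "(of_real a \<cdot>\<^sub>m A + of_real b \<cdot>\<^sub>m 1\<^sub>m n) *\<^sub>v w = of_real a \<cdot>\<^sub>v (A *\<^sub>v w) + of_real b \<cdot>\<^sub>v w"
proof (rule eq_vecI)
  have M: "of_real a \<cdot>\<^sub>m A + of_real b \<cdot>\<^sub>m 1\<^sub>m n \<in> carrier_mat n n" using A by simp
  fix i assume "i < dim_vec (of_real a \<cdot>\<^sub>v (A *\<^sub>v w) + of_real b \<cdot>\<^sub>v w)"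
  then have i: "i < n" using A w by simp
  have "((of_real a \<cdot>\<^sub>m A + of_real b \<cdot>\<^sub>m 1\<^sub>m n) *\<^sub>v w) $ i
      = (\<Sum>j<n. (of_real a \<cdot>\<^sub>m A + of_real b \<cdot>\<^sub>m 1\<^sub>m n) $$ (i,j) * w$j)"
    by (rule matvec_idx[OF M w i])
  also have "\<dots> = (\<Sum>j<n. of_real a * (A$$(i,j) * w$j) + (if j = i then of_real b * w$i else 0))"
    using A i by (intro sum.cong[OF refl]) (auto simp: algebra_simps)
  also have "\<dots> = of_real a * (\<Sum>j<n. A$$(i,j) * w$j) + of_real b * w$i"
    using i by (simp add: sum.distrib sum_distrib_left)
  also have "\<dots> = (of_real a \<cdot>\<^sub>v (A *\<^sub>v w) + of_real b \<cdot>\<^sub>v w) $ i"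
    unfolding matvec_idx[OF A w i, symmetric] using A w i by simp
  finally show "((of_real a \<cdot>\<^sub>m A + of_real b \<cdot>\<^sub>m 1\<^sub>m n) *\<^sub>v w) $ i = (of_real a \<cdot>\<^sub>v (A *\<^sub>v w) + of_real b \<cdot>\<^sub>v w) $ i" .
qed (use A w in simp)

lemma depol_herm: fixes A :: "complex mat" assumes h: "hermitian_mat n A"
  shows "hermitian_mat n (of_real a \<cdot>\<^sub>m A + of_real b \<cdot>\<^sub>m 1\<^sub>m n)"
proof -
  have A: "A \<in> carrier_mat n n" by (rule herm_carrier[OF h])
  have hh: "\<forall>i<n. \<forall>j<n. A $$ (i,j) = cnj (A $$ (j,i))" using h unfolding hermitian_mat_def by blast
  show ?thesis unfolding hermitian_mat_def
  proof (intro conjI allI impI)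
    show "of_real a \<cdot>\<^sub>m A + of_real b \<cdot>\<^sub>m 1\<^sub>m n \<in> carrier_mat n n" using A by simp
    fix i j assume i: "i < n" and j: "j < n"
    have e: "A $$ (i,j) = cnj (A $$ (j,i))" using hh i j by blast
    show "(of_real a \<cdot>\<^sub>m A + of_real b \<cdot>\<^sub>m 1\<^sub>m n) $$ (i, j) = cnj ((of_real a \<cdot>\<^sub>m A + of_real b \<cdot>\<^sub>m 1\<^sub>m n) $$ (j, i))"
      using A i j by (simp add: e)
  qed
qed

lemma smult_herm: fixes A :: "complex mat" assumes h: "hermitian_mat n A"
  shows "hermitian_mat n (of_real a \<cdot>\<^sub>m A)"
proof -
  have A: "A \<in> carrier_mat n n" by (rule herm_carrier[OF h])
  have hh: "\<forall>i<n. \<forall>j<n. A $$ (i,j) = cnj (A $$ (j,i))" using h unfolding hermitian_mat_def by blast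
  show ?thesis unfolding hermitian_mat_def
  proof (intro conjI allI impI)
    show "of_real a \<cdot>\<^sub>m A \<in> carrier_mat n n" using A by simp
    fix i j assume i: "i < n" and j: "j < n"
    have e: "A $$ (i,j) = cnj (A $$ (j,i))" using hh i j by blast
    show "(of_real a \<cdot>\<^sub>m A) $$ (i, j) = cnj ((of_real a \<cdot>\<^sub>m A) $$ (j, i))"
      using A i j by (simp add: e)
  qed
qed

lemma depol_inj: fixes A :: "complex mat"
  assumes psd: "\<And>x. x \<in> carrier_vec n \<Longrightarrow> 0 \<le> Re ((A *\<^sub>v x) \<bullet>c x)"
    and A: "A \<in> carrier_mat n n" and a: "a \<ge> 0" and b: "b > 0" and k: "k \<in> carrier_vec n"
    and e: "of_real a \<cdot>\<^sub>v (A *\<^sub>v k) + of_real b \<cdot>\<^sub>v k = 0\<^sub>v n"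
  shows "k = 0\<^sub>v n"
proof -
  have Ak: "A *\<^sub>v k \<in> carrier_vec n" using A k by simp
  have "(of_real a \<cdot>\<^sub>v (A *\<^sub>v k) + of_real b \<cdot>\<^sub>v k) \<bullet>c k = of_real a * ((A *\<^sub>v k) \<bullet>c k) + of_real b * (k \<bullet>c k)"
    using Ak k by (simp add: cs_add_left cs_smult_left)
  then have "of_real a * ((A *\<^sub>v k) \<bullet>c k) + of_real b * (k \<bullet>c k) = 0"
    unfolding e using k by (simp add: cs_zero_left)
  then have "Re (of_real a * ((A *\<^sub>v k) \<bullet>c k) + of_real b * (k \<bullet>c k)) = 0" by simp
  then have "a * Re ((A *\<^sub>v k) \<bullet>c k) + b * Re (k \<bullet>c k) = 0" by simp
  moreover have "0 \<le> a * Re ((A *\<^sub>v k) \<bullet>c k)" using psd[OF k] a by simp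
  moreover have "0 \<le> Re (k \<bullet>c k)" by (rule cs_self_nonneg[OF k])
  ultimately have "Re (k \<bullet>c k) = 0" using b by (smt (verit) mult_pos_pos)
  then show ?thesis by (rule cs_self_zero[OF k])
qed

theorem mainTheorem2:
  fixes d :: nat and \<Theta> :: "real set" and \<rho> :: "real \<Rightarrow> complex mat" and \<theta> :: real
  assumes "open \<Theta>"
    and "\<forall>t \<in> \<Theta>. density_op d (\<rho> t)"
    and "\<forall>t \<in> \<Theta>. mat_differentiable d \<rho> t"
    and "\<theta> \<in> \<Theta>"
  shows "((\<lambda>\<epsilon>. RLD_fisher d (depolarize d \<epsilon> \<rho>) \<theta>) \<longlongrightarrow> RLD_fisher d \<rho> \<theta>) (at_right 0)"
proof -
  note opT = assms(1) and th = assms(4)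
  have dens: "\<And>t. t \<in> \<Theta> \<Longrightarrow> density_op d (\<rho> t)" using assms(2) by blast
  have hermt: "\<And>t. t \<in> \<Theta> \<Longrightarrow> hermitian_mat d (\<rho> t)"
    using dens unfolding density_op_def psd_mat_def by blast
  have carrt: "\<And>t. t \<in> \<Theta> \<Longrightarrow> \<rho> t \<in> carrier_mat d d" using hermt herm_carrier by blast
  define \<rho>0 where "\<rho>0 = \<rho> \<theta>"
  have h0: "hermitian_mat d \<rho>0" unfolding \<rho>0_def by (rule hermt[OF th])
  have A0: "\<rho>0 \<in> carrier_mat d d" by (rule herm_carrier[OF h0])
  have psd0: "\<And>x. x \<in> carrier_vec d \<Longrightarrow> Im ((\<rho>0 *\<^sub>v x) \<bullet>c x) = 0 \<and> 0 \<le> Re ((\<rho>0 *\<^sub>v x) \<bullet>c x)"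
    using dens[OF th] unfolding density_op_def psd_mat_def \<rho>0_def by blast
  have dpos: "d > 0"
  proof (rule ccontr)
    assume "\<not> d > 0" then have "d = 0" by simp
    then have "mtrace \<rho>0 = 0" using A0 unfolding mtrace_def by simp
    moreover have "mtrace \<rho>0 = 1" using dens[OF th] unfolding density_op_def \<rho>0_def by blast
    ultimately show False by simp
  qed
  define D where "D = mat_deriv d \<rho> \<theta>"
  have Dc: "D \<in> carrier_mat d d" unfolding D_def mat_deriv_def by simp
  have Dij: "D $$ (i,j) = vector_derivative (\<lambda>t. \<rho> t $$ (i,j)) (at \<theta>)" if "i < d" "j < d" for i j
    unfolding D_def mat_deriv_def using that by simp
  have hasder: "((\<lambda>t. \<rho> t $$ (i,j)) has_vector_derivative D $$ (i,j)) (at \<theta>)" if ij: "i < d" "j < d" for i j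
  proof -
    have "(\<lambda>t. \<rho> t $$ (i,j)) differentiable (at \<theta>)"
      using assms(3) th ij unfolding mat_differentiable_def by blast
    then show ?thesis unfolding Dij[OF ij] by (simp add: vector_derivative_works[symmetric])
  qed
  have hD: "hermitian_mat d D" unfolding hermitian_mat_def
  proof (intro conjI allI impI)
    show "D \<in> carrier_mat d d" by (rule Dc)
    fix i j assume i: "i < d" and j: "j < d"
    have dc: "((\<lambda>t. cnj (\<rho> t $$ (j,i))) has_vector_derivative cnj (D $$ (j,i))) (at \<theta>)"
      by (rule has_vector_derivative_cnj[OF hasder[OF j i]])
    have eqt: "cnj (\<rho> t $$ (j,i)) = \<rho> t $$ (i,j)" if "t \<in> \<Theta>" for t
    proof -
      have "\<forall>i<d. \<forall>j<d. \<rho> t $$ (i,j) = cnj (\<rho> t $$ (j,i))" using hermt[OF that] unfolding hermitian_mat_def by blast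
      then have "\<rho> t $$ (i,j) = cnj (\<rho> t $$ (j,i))" using i j by blast
      then show ?thesis by simp
    qed
    have "((\<lambda>t. \<rho> t $$ (i,j)) has_vector_derivative cnj (D $$ (j,i))) (at \<theta>)"
      by (rule has_vector_derivative_transform_within_open[OF dc opT th eqt])
    then have "vector_derivative (\<lambda>t. \<rho> t $$ (i,j)) (at \<theta>) = cnj (D $$ (j,i))" by (rule vector_derivative_at)
    then show "D $$ (i,j) = cnj (D $$ (j,i))" using Dij[OF i j] by simp
  qed
  define M where "M = (\<lambda>\<epsilon>. depolarize d \<epsilon> \<rho> \<theta>)"
  have Meq: "M \<epsilon> = of_real (1-\<epsilon>) \<cdot>\<^sub>m \<rho>0 + of_real (\<epsilon> / real d) \<cdot>\<^sub>m 1\<^sub>m d" for \<epsilon>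
    unfolding M_def depolarize_def \<rho>0_def ..
  have Mh: "hermitian_mat d (M \<epsilon>)" for \<epsilon> unfolding Meq by (rule depol_herm[OF h0])
  have Mv: "M \<epsilon> *\<^sub>v w = of_real (1-\<epsilon>) \<cdot>\<^sub>v (\<rho>0 *\<^sub>v w) + of_real (\<epsilon> / real d) \<cdot>\<^sub>v w"
    if "w \<in> carrier_vec d" for \<epsilon> w unfolding Meq by (rule depol_mv[OF A0 that])
  have Msupp: "w \<in> supp_op d (M \<epsilon>)" if w: "w \<in> carrier_vec d" and e: "0 < \<epsilon>" "\<epsilon> < 1" for w \<epsilon>
  proof -
    obtain y k where y: "y \<in> carrier_vec d" and k: "k \<in> carrier_vec d"
      and wyk: "w = M \<epsilon> *\<^sub>v y + k" and Mk: "M \<epsilon> *\<^sub>v k = 0\<^sub>v d"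
      using herm_decomp[OF Mh w] by blast
    have ek: "of_real (1-\<epsilon>) \<cdot>\<^sub>v (\<rho>0 *\<^sub>v k) + of_real (\<epsilon> / real d) \<cdot>\<^sub>v k = 0\<^sub>v d"
      using Mk unfolding Mv[OF k] .
    have "k = 0\<^sub>v d"
      by (rule depol_inj[OF _ A0 _ _ k ek]) (use psd0 e dpos in auto)
    moreover have My: "M \<epsilon> *\<^sub>v y \<in> carrier_vec d" using herm_carrier[OF Mh[of \<epsilon>]] y by simp
    ultimately have "w = M \<epsilon> *\<^sub>v y" using wyk right_zero_vec[OF My] by simp
    then show ?thesis using supp_opI[OF y] by simp
  qed
  have Dder: "mat_deriv d (depolarize d \<epsilon> \<rho>) \<theta> = of_real (1-\<epsilon>) \<cdot>\<^sub>m D" for \<epsilon>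
  proof (rule eq_matI)
    show "dim_row (mat_deriv d (depolarize d \<epsilon> \<rho>) \<theta>) = dim_row (of_real (1-\<epsilon>) \<cdot>\<^sub>m D)"
      using Dc unfolding mat_deriv_def by simp
    show "dim_col (mat_deriv d (depolarize d \<epsilon> \<rho>) \<theta>) = dim_col (of_real (1-\<epsilon>) \<cdot>\<^sub>m D)"
      using Dc unfolding mat_deriv_def by simp
    fix i j assume "i < dim_row (of_real (1-\<epsilon>) \<cdot>\<^sub>m D)" "j < dim_col (of_real (1-\<epsilon>) \<cdot>\<^sub>m D)"
    then have i: "i < d" and j: "j < d" using Dc by auto
    have dc: "((\<lambda>t. of_real (1-\<epsilon>) * \<rho> t $$ (i,j) + of_real (\<epsilon> / real d) * (1\<^sub>m d :: complex mat) $$ (i,j))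
        has_vector_derivative of_real (1-\<epsilon>) * D $$ (i,j)) (at \<theta>)"
      unfolding has_vector_derivative_add_const by (rule has_vector_derivative_mult_right[OF hasder[OF i j]])
    have eqt: "of_real (1-\<epsilon>) * \<rho> t $$ (i,j) + of_real (\<epsilon> / real d) * (1\<^sub>m d :: complex mat) $$ (i,j)
        = depolarize d \<epsilon> \<rho> t $$ (i,j)" if "t \<in> \<Theta>" for t
      unfolding depolarize_def using carrt[OF that] i j by simp
    have "((\<lambda>t. depolarize d \<epsilon> \<rho> t $$ (i,j)) has_vector_derivative of_real (1-\<epsilon>) * D $$ (i,j)) (at \<theta>)"
      by (rule has_vector_derivative_transform_within_open[OF dc opT th eqt])
    then have "vector_derivative (\<lambda>t. depolarize d \<epsilon> \<rho> t $$ (i,j)) (at \<theta>) = of_real (1-\<epsilon>) * D $$ (i,j)"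
      by (rule vector_derivative_at)
    then show "mat_deriv d (depolarize d \<epsilon> \<rho>) \<theta> $$ (i, j) = (of_real (1-\<epsilon>) \<cdot>\<^sub>m D) $$ (i, j)"
      unfolding mat_deriv_def using i j Dc by simp
  qed
  have cD: "col D l \<in> carrier_vec d" for l using Dc by (intro carrier_vecI) simp
  define W where "W = (\<lambda>\<epsilon> l. inv_supp d (M \<epsilon>) *\<^sub>v (of_real (1-\<epsilon>) \<cdot>\<^sub>v col D l))"
  define F where "F = (\<lambda>\<epsilon> l. W \<epsilon> l \<bullet>c (of_real (1-\<epsilon>) \<cdot>\<^sub>v col D l))"
  have RLDe: "RLD_fisher d (depolarize d \<epsilon> \<rho>) \<theta> = ereal (Re (\<Sum>l<d. F \<epsilon> l))" if e: "0 < \<epsilon>" "\<epsilon> < 1" for \<epsilon>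
  proof -
    let ?De = "mat_deriv d (depolarize d \<epsilon> \<rho>) \<theta>"
    have De: "?De = of_real (1-\<epsilon>) \<cdot>\<^sub>m D" by (rule Dder)
    have PX: "P_inv d (M \<epsilon>) (inv_supp d (M \<epsilon>))" by (rule herm_inv_supp[OF Mh])
    have Xc: "inv_supp d (M \<epsilon>) \<in> carrier_mat d d" using PX unfolding P_inv_def by blast
    have sub: "supp_op d ?De \<subseteq> supp_op d (M \<epsilon>)"
    proof
      fix x assume "x \<in> supp_op d ?De"
      then obtain v where v: "v \<in> carrier_vec d" "x = ?De *\<^sub>v v" by (rule supp_opE)
      have "x \<in> carrier_vec d" unfolding v(2) De by (rule mult_mat_vec_carrier[OF smult_carrier_mat[OF Dc] v(1)])
      then show "x \<in> supp_op d (M \<epsilon>)" by (rule Msupp[OF _ e])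
    qed
    have hDe: "hermitian_mat d ?De" unfolding De by (rule smult_herm[OF hD])
    have "RLD_fisher d (depolarize d \<epsilon> \<rho>) \<theta> = ereal (Re (mtrace (?De * ?De * inv_supp d (M \<epsilon>))))"
      unfolding RLD_fisher_def Let_def using sub unfolding M_def by simp
    also have "mtrace (?De * ?De * inv_supp d (M \<epsilon>)) = (\<Sum>l<d. (inv_supp d (M \<epsilon>) *\<^sub>v col ?De l) \<bullet>c col ?De l)"
      by (rule trace_herm[OF hDe Xc])
    also have "\<dots> = (\<Sum>l<d. F \<epsilon> l)" unfolding F_def W_def De using Dc by (intro sum.cong refl) (simp add: col_smult)
    finally show ?thesis .
  qed
  have Weq: "W \<epsilon> l \<in> carrier_vec d \<and> of_real (1-\<epsilon>) \<cdot>\<^sub>v (\<rho>0 *\<^sub>v W \<epsilon> l) + of_real (\<epsilon> / real d) \<cdot>\<^sub>v W \<epsilon> l = of_real (1-\<epsilon>) \<cdot>\<^sub>v col D l"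
    if e: "0 < \<epsilon>" "\<epsilon> < 1" and l: "l < d" for \<epsilon> l
  proof -
    have PX: "P_inv d (M \<epsilon>) (inv_supp d (M \<epsilon>))" by (rule herm_inv_supp[OF Mh])
    have Xc: "inv_supp d (M \<epsilon>) \<in> carrier_mat d d" using PX unfolding P_inv_def by blast
    have vc: "of_real (1-\<epsilon>) \<cdot>\<^sub>v col D l \<in> carrier_vec d" using cD by simp
    have vs: "of_real (1-\<epsilon>) \<cdot>\<^sub>v col D l \<in> supp_op d (M \<epsilon>)" by (rule Msupp[OF vc e])
    have "M \<epsilon> *\<^sub>v W \<epsilon> l = of_real (1-\<epsilon>) \<cdot>\<^sub>v col D l" unfolding W_def using PX vs unfolding P_inv_def by blast
    moreover have Wc: "W \<epsilon> l \<in> carrier_vec d" unfolding W_def using Xc vc by simp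
    ultimately show ?thesis using Mv[OF Wc] by simp
  qed
  define X0 where "X0 = inv_supp d \<rho>0"
  have PX0: "P_inv d \<rho>0 X0" unfolding X0_def by (rule herm_inv_supp[OF h0])
  have X0c: "X0 \<in> carrier_mat d d" using PX0 unfolding P_inv_def by blast
  have Weps: "W \<epsilon> l \<in> carrier_vec d" "of_real (1-\<epsilon>) \<cdot>\<^sub>v (\<rho>0 *\<^sub>v W \<epsilon> l) + of_real (\<epsilon> / real d) \<cdot>\<^sub>v W \<epsilon> l = of_real (1-\<epsilon>) \<cdot>\<^sub>v col D l"
    if "0 < \<epsilon>" "\<epsilon> < 1" "l < d" for \<epsilon> l using Weq[OF that] by blast+
  have ab: "0 < 1 - \<epsilon>" "0 < \<epsilon> / real d" if "0 < \<epsilon>" "\<epsilon> < 1" for \<epsilon> using that dpos by auto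
  have Fnn: "0 \<le> Re (F \<epsilon> l)" if e: "0 < \<epsilon>" "\<epsilon> < 1" and l: "l < d" for \<epsilon> l
  proof -
    have "\<epsilon> / real d * Re (W \<epsilon> l \<bullet>c W \<epsilon> l) \<le> Re (F \<epsilon> l)"
      unfolding F_def by (rule pv_nonneg[OF h0 psd0 ab[OF e] cD Weps[OF e l]])
    moreover have "0 \<le> \<epsilon> / real d * Re (W \<epsilon> l \<bullet>c W \<epsilon> l)"
      by (intro mult_nonneg_nonneg less_imp_le[OF ab(2)[OF e]] cs_self_nonneg[OF Weps(1)[OF e l]])
    ultimately show ?thesis by linarith
  qed
  have evRLD: "eventually (\<lambda>\<epsilon>. ereal (Re (\<Sum>l<d. F \<epsilon> l)) = RLD_fisher d (depolarize d \<epsilon> \<rho>) \<theta>) (at_right 0)"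
    by (rule eventually_at_rightI[of 0 1]) (use RLDe in auto)
  show ?thesis
  proof (cases "supp_op d D \<subseteq> supp_op d \<rho>0")
    case True
    have RLD0: "RLD_fisher d \<rho> \<theta> = ereal (Re (\<Sum>l<d. (X0 *\<^sub>v col D l) \<bullet>c col D l))"
    proof -
      have "RLD_fisher d \<rho> \<theta> = ereal (Re (mtrace (D * D * X0)))"
        unfolding RLD_fisher_def Let_def D_def[symmetric] X0_def \<rho>0_def[symmetric] using True by simp
      also have "mtrace (D * D * X0) = (\<Sum>l<d. (X0 *\<^sub>v col D l) \<bullet>c col D l)" by (rule trace_herm[OF hD X0c])
      finally show ?thesis .
    qed
    have colsupp: "col D l \<in> supp_op d \<rho>0" if "l < d" for l
    proof -
      have "col D l = D *\<^sub>v unit_vec d l" using matvec_unit[OF Dc that] by simp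
      then have "col D l \<in> supp_op d D" using supp_opI[of "unit_vec d l" d D] by simp
      then show ?thesis using True by blast
    qed
    define u where "u = (\<lambda>l. X0 *\<^sub>v col D l)"
    have uc: "u l \<in> carrier_vec d" for l unfolding u_def using X0c cD by simp
    have ueq: "col D l = \<rho>0 *\<^sub>v u l" if "l < d" for l
      using PX0 colsupp[OF that] unfolding P_inv_def u_def by auto
    have lim_l: "((\<lambda>\<epsilon>. F \<epsilon> l) \<longlongrightarrow> u l \<bullet>c col D l) (at_right 0)" if l: "l < d" for l
    proof -
      define c where "c = u l \<bullet>c col D l"
      define S where "S = (\<Sum>i<d. cmod (u l $ i))"
      have bound: "eventually (\<lambda>\<epsilon>. norm (F \<epsilon> l - of_real (1-\<epsilon>) * c) \<le> \<epsilon> * (S\<^sup>2 / real d)) (at_right 0)"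
      proof (rule eventually_at_rightI[of 0 1])
        fix \<epsilon> :: real assume "\<epsilon> \<in> {0<..<1}" then have e: "0 < \<epsilon>" "\<epsilon> < 1" by auto
        have "norm (F \<epsilon> l - of_real (1-\<epsilon>) * c) \<le> \<epsilon> / real d * S\<^sup>2"
          unfolding F_def c_def S_def
          by (rule pv_supp[OF h0 psd0 ab[OF e] cD Weps[OF e l] uc ueq[OF l]])
        then show "norm (F \<epsilon> l - of_real (1-\<epsilon>) * c) \<le> \<epsilon> * (S\<^sup>2 / real d)" by simp
      qed simp
      have "((\<lambda>\<epsilon>::real. \<epsilon>) \<longlongrightarrow> 0) (at_right 0)" by (rule tendsto_ident_at)
      then have "((\<lambda>\<epsilon>::real. \<epsilon> * (S\<^sup>2 / real d)) \<longlongrightarrow> 0 * (S\<^sup>2 / real d)) (at_right 0)"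
        by (rule tendsto_mult_right)
      then have g0: "((\<lambda>\<epsilon>::real. \<epsilon> * (S\<^sup>2 / real d)) \<longlongrightarrow> 0) (at_right 0)" by simp
      have h2: "((\<lambda>\<epsilon>. F \<epsilon> l - of_real (1-\<epsilon>) * c) \<longlongrightarrow> 0) (at_right 0)"
        by (rule Lim_null_comparison[OF bound g0])
      have "((\<lambda>\<epsilon>::real. 1 - \<epsilon>) \<longlongrightarrow> 1 - 0) (at_right 0)"
        by (intro tendsto_diff tendsto_const tendsto_ident_at)
      then have "((\<lambda>\<epsilon>::real. complex_of_real (1 - \<epsilon>)) \<longlongrightarrow> complex_of_real (1 - 0)) (at_right 0)"
        by (rule tendsto_of_real)
      then have "((\<lambda>\<epsilon>. complex_of_real (1 - \<epsilon>) * c) \<longlongrightarrow> complex_of_real (1 - 0) * c) (at_right 0)"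
        by (rule tendsto_mult_right)
      then have h1: "((\<lambda>\<epsilon>. complex_of_real (1 - \<epsilon>) * c) \<longlongrightarrow> c) (at_right 0)" by simp
      have "((\<lambda>\<epsilon>. (F \<epsilon> l - of_real (1-\<epsilon>) * c) + of_real (1-\<epsilon>) * c) \<longlongrightarrow> 0 + c) (at_right 0)"
        by (rule tendsto_add[OF h2 h1])
      then show ?thesis unfolding c_def by simp
    qed
    have "((\<lambda>\<epsilon>. \<Sum>l<d. F \<epsilon> l) \<longlongrightarrow> (\<Sum>l<d. u l \<bullet>c col D l)) (at_right 0)"
      by (rule tendsto_sum) (use lim_l in auto)
    then have "((\<lambda>\<epsilon>. Re (\<Sum>l<d. F \<epsilon> l)) \<longlongrightarrow> Re (\<Sum>l<d. u l \<bullet>c col D l)) (at_right 0)"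
      by (rule tendsto_Re)
    then have "((\<lambda>\<epsilon>. ereal (Re (\<Sum>l<d. F \<epsilon> l))) \<longlongrightarrow> ereal (Re (\<Sum>l<d. u l \<bullet>c col D l))) (at_right 0)"
      unfolding lim_ereal .
    then have "((\<lambda>\<epsilon>. RLD_fisher d (depolarize d \<epsilon> \<rho>) \<theta>) \<longlongrightarrow> ereal (Re (\<Sum>l<d. u l \<bullet>c col D l))) (at_right 0)"
      by (rule Lim_transform_eventually[OF _ evRLD])
    then show ?thesis unfolding RLD0 u_def .
  next
    case False
    have "\<exists>l<d. col D l \<notin> supp_op d \<rho>0"
    proof (rule ccontr)
      assume "\<not> (\<exists>l<d. col D l \<notin> supp_op d \<rho>0)"
      then have all: "\<And>l. l < d \<Longrightarrow> col D l \<in> supp_op d \<rho>0" by blast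
      have X0D: "X0 * D \<in> carrier_mat d d" using X0c Dc by simp
      have DE: "\<rho>0 * (X0 * D) = D"
      proof (rule mat_eq_by_col)
        show "\<rho>0 * (X0 * D) \<in> carrier_mat d d" using A0 X0D by simp
        show "D \<in> carrier_mat d d" by (rule Dc)
        fix l assume l: "l < d"
        have "col (\<rho>0 * (X0 * D)) l = \<rho>0 *\<^sub>v (X0 *\<^sub>v col D l)"
          by (simp add: col_mult2[OF A0 X0D l] col_mult2[OF X0c Dc l])
        also have "\<dots> = col D l" using PX0 all[OF l] unfolding P_inv_def by blast
        finally show "col (\<rho>0 * (X0 * D)) l = col D l" .
      qed
      have "supp_op d D \<subseteq> supp_op d \<rho>0"
      proof
        fix x assume "x \<in> supp_op d D"
        then obtain v where v: "v \<in> carrier_vec d" "x = D *\<^sub>v v" by (rule supp_opE)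
        have "x = \<rho>0 *\<^sub>v ((X0 * D) *\<^sub>v v)"
          unfolding v(2) by (subst DE[symmetric]) (rule assoc_mult_mat_vec[OF A0 X0D v(1)])
        moreover have "(X0 * D) *\<^sub>v v \<in> carrier_vec d" using X0D v(1) by simp
        ultimately show "x \<in> supp_op d \<rho>0" using supp_opI by blast
      qed
      then show False using False by blast
    qed
    then obtain l where l: "l < d" and nl: "col D l \<notin> supp_op d \<rho>0" by blast
    obtain y k where y: "y \<in> carrier_vec d" and k: "k \<in> carrier_vec d"
      and vyk: "col D l = \<rho>0 *\<^sub>v y + k" and Ak: "\<rho>0 *\<^sub>v k = 0\<^sub>v d"
      using herm_decomp[OF h0 cD] by blast
    have k0: "k \<noteq> 0\<^sub>v d"
    proof
      assume "k = 0\<^sub>v d"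
      moreover have "\<rho>0 *\<^sub>v y \<in> carrier_vec d" using A0 y by simp
      ultimately have "col D l = \<rho>0 *\<^sub>v y" using vyk by simp
      then show False using nl supp_opI[OF y] by simp
    qed
    have RLD0: "RLD_fisher d \<rho> \<theta> = \<infinity>"
      unfolding RLD_fisher_def Let_def D_def[symmetric] \<rho>0_def[symmetric] using False by simp
    define K2 where "K2 = Re (k \<bullet>c k)"
    define T where "T = (\<Sum>i<d. cmod (k$i))"
    have K2p: "K2 > 0"
    proof -
      have "K2 \<ge> 0" unfolding K2_def by (rule cs_self_nonneg[OF k])
      moreover have "K2 \<noteq> 0" using cs_self_zero[OF k] k0 unfolding K2_def by blast
      ultimately show ?thesis by simp
    qed
    have Tp: "T > 0"
    proof (rule ccontr)
      assume "\<not> T > 0"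
      moreover have "T \<ge> 0" unfolding T_def by (simp add: sum_nonneg)
      ultimately have "T = 0" by simp
      then have z: "\<forall>i\<in>{..<d}. cmod (k$i) = 0" unfolding T_def
        using sum_nonneg_eq_0_iff[of "{..<d}" "\<lambda>i. cmod (k$i)"] by simp
      have "k = 0\<^sub>v d"
      proof (rule eq_vecI)
        fix i assume "i < dim_vec (0\<^sub>v d :: complex vec)"
        then have i: "i \<in> {..<d}" by simp
        then show "k $ i = 0\<^sub>v d $ i" using z by simp
      qed (use k in simp)
      then show False using k0 by simp
    qed
    have lb: "(1-\<epsilon>)\<^sup>2 * K2\<^sup>2 / (\<epsilon> / real d * T\<^sup>2) \<le> Re (\<Sum>l<d. F \<epsilon> l)" if e: "0 < \<epsilon>" "\<epsilon> < 1" for \<epsilon>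
    proof -
      have "(1-\<epsilon>)\<^sup>2 * K2\<^sup>2 / (\<epsilon> / real d * T\<^sup>2) \<le> Re (F \<epsilon> l)"
        unfolding F_def K2_def T_def
        by (rule pv_unsupp[OF h0 psd0 ab[OF e] cD Weps[OF e l] y k vyk Ak k0])
      also have "Re (F \<epsilon> l) \<le> (\<Sum>l<d. Re (F \<epsilon> l))"
        by (rule member_le_sum) (use l Fnn[OF e] in auto)
      also have "\<dots> = Re (\<Sum>l<d. F \<epsilon> l)" by (simp add: Re_sum)
      finally show ?thesis .
    qed
    define C where "C = K2\<^sup>2 * real d / T\<^sup>2"
    have Cp: "C > 0" unfolding C_def using K2p Tp dpos by simp
    have "((\<lambda>\<epsilon>. RLD_fisher d (depolarize d \<epsilon> \<rho>) \<theta>) \<longlongrightarrow> \<infinity>) (at_right 0)"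
      unfolding tendsto_PInfty
    proof
      fix r :: real
      define \<delta> where "\<delta> = min (1/2) (C / (4 * (\<bar>r\<bar> + 1)))"
      have dp: "\<delta> > 0" unfolding \<delta>_def using Cp by (simp add: abs_ge_zero add_pos_nonneg)
      have "eventually (\<lambda>\<epsilon>. ereal r < ereal (Re (\<Sum>l<d. F \<epsilon> l))) (at_right 0)"
      proof (rule eventually_at_rightI[OF _ dp])
        fix \<epsilon> assume "\<epsilon> \<in> {0<..<\<delta>}"
        then have e0: "0 < \<epsilon>" and ed: "\<epsilon> < \<delta>" by auto
        have e1: "\<epsilon> < 1" using ed unfolding \<delta>_def by simp
        have eh: "\<epsilon> \<le> 1/2" using ed unfolding \<delta>_def by simp
        have ec: "\<epsilon> < C / (4 * (\<bar>r\<bar> + 1))" using ed unfolding \<delta>_def by simp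
        have r4: "4 * (\<bar>r\<bar> + 1) > 0" by (simp add: add_pos_nonneg)
        have "4 * (\<bar>r\<bar> + 1) * \<epsilon> < C" using ec r4 by (simp add: less_divide_eq mult.commute)
        then have big: "4 * (\<bar>r\<bar> + 1) < C / \<epsilon>" using e0 by (simp add: less_divide_eq)
        have q: "1/4 \<le> (1-\<epsilon>)\<^sup>2"
        proof -
          have "(1/2)\<^sup>2 \<le> (1-\<epsilon>)\<^sup>2" using eh by (intro power_mono) auto
          then show ?thesis by (simp add: power2_eq_square)
        qed
        have Ce: "0 \<le> C / \<epsilon>" using Cp e0 by simp
        have eqv: "(1-\<epsilon>)\<^sup>2 * K2\<^sup>2 / (\<epsilon> / real d * T\<^sup>2) = (1-\<epsilon>)\<^sup>2 * (C / \<epsilon>)"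
          unfolding C_def using e0 Tp dpos by (simp add: field_simps)
        have "r < \<bar>r\<bar> + 1" by simp
        also have "\<dots> < 1/4 * (C / \<epsilon>)" using big by simp
        also have "\<dots> \<le> (1-\<epsilon>)\<^sup>2 * (C / \<epsilon>)" using q Ce by (rule mult_right_mono)
        also have "\<dots> \<le> Re (\<Sum>l<d. F \<epsilon> l)" using lb[OF e0 e1] unfolding eqv .
        finally show "ereal r < ereal (Re (\<Sum>l<d. F \<epsilon> l))" by simp
      qed
      then show "eventually (\<lambda>\<epsilon>. ereal r < RLD_fisher d (depolarize d \<epsilon> \<rho>) \<theta>) (at_right 0)"
        using evRLD by eventually_elim metis
    qed
    then show ?thesis unfolding RLD0 .
  qed
qed

end
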